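(* Let $\Sigma$ be an extended vocabulary which contains a unary set predicate name $\mathsf{SET}$ and does not contain the binary relation name $\mathsf{ancestor}$. There exists a non-deterministic overlay $\mathrm{CMSO}[2]$-transduction $\tau$ with the following property. Let $(U,\mathcal{S})$ be a set system, represented as the $\{\mathsf{SET}\}$-structure $\mathbb{S}$, and let $T$ be the laminar tree induced by $(U,\mathcal{S})$ (with $L(T)=U$). Let $\mathbb{A}$ be any $\Sigma$-structure with $\mathbb{S}\sqsubseteq\mathbb{A}$. Then $\tau(\mathbb{A})$ is non-empty, and every output in $\tau(\mathbb{A})$ is equal to $\mathbb{A}\sqcup\mathbb{T}$ for some $\{\mathsf{ancestor}\}$-structure $\mathbb{T}$ representing $T$.
   Context: Structures. An extended vocabulary is a finite set of symbols, each a relation name or a set predicate name, with an arity. A $\Sigma$-structure $\mathbb{A}$ consists of a finite universe $U_{\mathbb{A}}$, for each relation name $R\in\Sigma$ of arity $k$ a $k$-ary relation $R_{\mathbb{A}}$ on $U_{\mathbb{A}}$, and for each set predicate name $P\in\Sigma$ of arity $k$ a $k$-ary relation $P_{\mathbb{A}}$ on subsets of $U_{\mathbb{A}}$. For a $\Sigma$-structure $\mathbb{A}$ and a $\Gamma$-structure $\mathbb{B}$: $\mathbb{A}\sqsubseteq\mathbb{B}$ means $\Sigma\subseteq\Gamma$, $U_{\mathbb{A}}\subseteq U_{\mathbb{B}}$ and $Q_{\mathbb{A}}=Q_{\mathbb{B}}$ for all $Q\in\Sigma$; $\mathbb{A}\sqcup\mathbb{B}$ is the $(\Sigma\cup\Gamma)$-structure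 with universe $U_{\mathbb{A}}\cup U_{\mathbb{B}}$ interpreting symbols of $\Sigma\setminus\Gamma$ as in $\mathbb{A}$, of $\Gamma\setminus\Sigma$ as in $\mathbb{B}$, and of $\Sigma\cap\Gamma$ as $Q_{\mathbb{A}}\cup Q_{\mathbb{B}}$. Logic and transductions. $\mathrm{CMSO}[2]$ is monadic second-order logic over such structures (quantification over elements and subsets of the universe; atomic formulas from equality, membership, the relations and set predicates) extended with a unary set predicate true of a set iff its size is even. A $\Sigma$-to-$\Gamma$ transduction is a set $\tau$ of pairs (input $\Sigma$-structure, output $\Gamma$-structure); $\tau(\mathbb{A})$ is the set of outputs on input $\mathbb{A}$; $\tau$ is an overlay transduction if $\mathbb{A}\sqsubseteq\mathbb{B}$ for all $(\mathbb{A},\mathbb{B})\in\tau$. A $\mathrm{CMSO}[2]$-transduction is a finite composition of atomic transductions: filtering (keep the input unchanged iff it satisfies a fixed sentence); universe restriction (restrict universe and all relations/predicates to the elements satisfying a fixed formula with one free first-order variable); interpretation (same universe, each output symbol $Q$ interpreted as the tuples satisfying a fixed formula with $\mathrm{ar}(Q)$ free variables, first-order for relation names, monadic for set predicate names); copying (for fixed $k$, add $k$ fresh copies of every element and binary relations $\mathsf{copy}_i$, $i\in[k]$, relating each original element to its $i$-th copy, keeping original interpretations); colouring (add a new unary relation interpreted as an arbitrary subset of the universe, every choice yielding an output). It is non-deterministic if it uses colouring. Set systems. A set system is a pair $(U,\mathcal{S})$ with $U$ finite and $\mathcal{S}$ a family of subsets of $U$ such that $\emptyset\notin\mathcal{S}$,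 $U\in\mathcal{S}$, and $\{a\}\in\mathcal{S}$ for every $a\in U$; it is represented as the $\{\mathsf{SET}\}$-structure with universe $U$ and unary set predicate $\mathsf{SET}$ interpreted as $\mathcal{S}$. Two sets overlap if they intersect and neither contains the other. A member of $\mathcal{S}$ is strong if it overlaps no member of $\mathcal{S}$; the family $\mathcal{S}_!$ of strong members is laminar (no two members overlap). The laminar tree induced by $(U,\mathcal{S})$ is the rooted tree whose nodes are the members of $\mathcal{S}_!$, with root $U$, where $X$ is a child of $Y$ iff $X\subsetneq Y$ and no member of $\mathcal{S}_!$ lies strictly between them; its leaves are the singletons, identified with the elements of $U$, so $L(T)=U$. A rooted tree $T$ with $L(T)=U$ is represented by an $\{\mathsf{ancestor}\}$-structure with universe $V(T)$ (containing $U$ as the leaves) in which $\mathsf{ancestor}(u,v)$ holds iff $u$ is an ancestor of $v$ (every node is its own ancestor). *)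

theory Defs
  imports Main
begin

datatype kind = RelK | SetK

text \<open>A symbol is (kind, name, arity): kind RelK = relation name, SetK = set predicate name.\<close>
type_synonym sym = "kind \<times> string \<times> nat"

text \<open>Elements of universes are natural numbers (an infinite supply, so that fresh
copies always exist). Tuples of a relation are lists of element values, tuples of a
set predicate are lists of set values.\<close>
datatype val = Elt nat | SetV "nat set"

record struct =
  voc :: "sym set"
  univ :: "nat set"
  interp :: "sym \<Rightarrow> val list set"

definition wf_struct :: "sym set \<Rightarrow> struct \<Rightarrow> bool" where
  "wf_struct Voc A \<longleftrightarrow> voc A = Voc \<and> finite Voc \<and> finite (univ A)
     \<and> (\<forall>s. s \<notin> Voc \<longrightarrow> interp A s = {})
     \<and> (\<forall>k n a t. (k, n, a) \<in> Voc \<and> t \<in> interp A (k, n, a) \<longrightarrow>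
           length t = a \<and>
           (\<forall>x\<in>set t. (case k of
               RelK \<Rightarrow> (\<exists>e\<in>univ A. x = Elt e)
             | SetK \<Rightarrow> (\<exists>X. X \<subseteq> univ A \<and> x = SetV X))))"

definition sqsub :: "struct \<Rightarrow> struct \<Rightarrow> bool" where
  "sqsub A B \<longleftrightarrow> voc A \<subseteq> voc B \<and> univ A \<subseteq> univ B \<and> (\<forall>Q\<in>voc A. interp A Q = interp B Q)"

definition join :: "struct \<Rightarrow> struct \<Rightarrow> struct" where
  "join A B = \<lparr> voc = voc A \<union> voc B, univ = univ A \<union> univ B,
     interp = (\<lambda>Q. if Q \<in> voc A \<and> Q \<in> voc B then interp A Q \<union> interp B Q
                 else if Q \<in> voc A then interp A Q
                 else if Q \<in> voc B then interp B Q else {}) \<rparr>"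

text \<open>First-order variables and set variables are both indexed by nat (separate namespaces).\<close>
datatype form =
    FEq nat nat
  | FMem nat nat
  | FRel string "nat list"
  | FSetP string "nat list"
  | FEven nat
  | FNot form
  | FOr form form
  | FEx1 nat form
  | FEx2 nat form

fun sat :: "struct \<Rightarrow> (nat \<Rightarrow> nat) \<Rightarrow> (nat \<Rightarrow> nat set) \<Rightarrow> form \<Rightarrow> bool" where
  "sat A v w (FEq x y) = (v x = v y)"
| "sat A v w (FMem x X) = (v x \<in> w X)"
| "sat A v w (FRel r xs) = (map (\<lambda>x. Elt (v x)) xs \<in> interp A (RelK, r, length xs))"
| "sat A v w (FSetP p Xs) = (map (\<lambda>X. SetV (w X)) Xs \<in> interp A (SetK, p, length Xs))"
| "sat A v w (FEven X) = even (card (w X))"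
| "sat A v w (FNot f) = (\<not> sat A v w f)"
| "sat A v w (FOr f g) = (sat A v w f \<or> sat A v w g)"
| "sat A v w (FEx1 x f) = (\<exists>a\<in>univ A. sat A (v(x := a)) w f)"
| "sat A v w (FEx2 X f) = (\<exists>S. S \<subseteq> univ A \<and> sat A v (w(X := S)) f)"

fun fv1 :: "form \<Rightarrow> nat set" where
  "fv1 (FEq x y) = {x, y}"
| "fv1 (FMem x X) = {x}"
| "fv1 (FRel r xs) = set xs"
| "fv1 (FSetP p Xs) = {}"
| "fv1 (FEven X) = {}"
| "fv1 (FNot f) = fv1 f"
| "fv1 (FOr f g) = fv1 f \<union> fv1 g"
| "fv1 (FEx1 x f) = fv1 f - {x}"
| "fv1 (FEx2 X f) = fv1 f"

fun fv2 :: "form \<Rightarrow> nat set" where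
  "fv2 (FEq x y) = {}"
| "fv2 (FMem x X) = {X}"
| "fv2 (FRel r xs) = {}"
| "fv2 (FSetP p Xs) = set Xs"
| "fv2 (FEven X) = {X}"
| "fv2 (FNot f) = fv2 f"
| "fv2 (FOr f g) = fv2 f \<union> fv2 g"
| "fv2 (FEx1 x f) = fv2 f"
| "fv2 (FEx2 X f) = fv2 f - {X}"

datatype atomic =
    Filter form
  | Restrict form
  | Interp "(sym \<times> form) list"
  | Copy "string list"
  | Colour string

fun wf_atomic :: "atomic \<Rightarrow> bool" where
  "wf_atomic (Filter f) = (fv1 f = {} \<and> fv2 f = {})"
| "wf_atomic (Restrict f) = (fv1 f \<subseteq> {0} \<and> fv2 f = {})"
| "wf_atomic (Interp l) = (distinct (map fst l) \<and>
     (\<forall>((k, n, a), f) \<in> set l. case k of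
         RelK \<Rightarrow> fv1 f \<subseteq> {..<a} \<and> fv2 f = {}
       | SetK \<Rightarrow> fv1 f = {} \<and> fv2 f \<subseteq> {..<a}))"
| "wf_atomic (Copy ns) = distinct ns"
| "wf_atomic (Colour c) = True"

fun interp_sym :: "struct \<Rightarrow> sym \<Rightarrow> form \<Rightarrow> val list set" where
  "interp_sym A (RelK, n, a) f =
     {map Elt xs | xs. length xs = a \<and> set xs \<subseteq> univ A \<and> sat A (\<lambda>i. xs ! i) (\<lambda>_. {}) f}"
| "interp_sym A (SetK, n, a) f =
     {map SetV Xs | Xs. length Xs = a \<and> (\<forall>X\<in>set Xs. X \<subseteq> univ A) \<and> sat A (\<lambda>_. 0) (\<lambda>i. Xs ! i) f}"

fun step :: "atomic \<Rightarrow> struct \<Rightarrow> struct \<Rightarrow> bool" where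
  "step (Filter f) A B = (B = A \<and> sat A (\<lambda>_. 0) (\<lambda>_. {}) f)"
| "step (Restrict f) A B =
     (let U' = {a \<in> univ A. sat A (\<lambda>_. a) (\<lambda>_. {}) f} in
      B = \<lparr> voc = voc A, univ = U',
            interp = (\<lambda>s. {t \<in> interp A s. \<forall>x\<in>set t. case x of Elt e \<Rightarrow> e \<in> U' | SetV X \<Rightarrow> X \<subseteq> U'}) \<rparr>)"
| "step (Interp l) A B =
     (B = \<lparr> voc = set (map fst l), univ = univ A,
            interp = (\<lambda>s. case map_of l s of None \<Rightarrow> {} | Some f \<Rightarrow> interp_sym A s f) \<rparr>)"
| "step (Copy ns) A B =
     (\<exists>f :: nat \<Rightarrow> nat \<Rightarrow> nat.
        inj_on (\<lambda>(i, a). f i a) ({..<length ns} \<times> univ A)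
      \<and> (\<forall>i<length ns. \<forall>a\<in>univ A. f i a \<notin> univ A)
      \<and> B = \<lparr> voc = voc A \<union> {(RelK, ns ! i, 2) | i. i < length ns},
              univ = univ A \<union> {f i a | i a. i < length ns \<and> a \<in> univ A},
              interp = (\<lambda>s. {[Elt a, Elt (f i a)] | a i. i < length ns \<and> s = (RelK, ns ! i, 2) \<and> a \<in> univ A}
                           \<union> (if s \<in> {(RelK, ns ! i, 2) | i. i < length ns} then {} else interp A s)) \<rparr>)"
| "step (Colour c) A B =
     (\<exists>C. C \<subseteq> univ A \<and>
        B = \<lparr> voc = voc A \<union> {(RelK, c, 1)}, univ = univ A,
              interp = (\<lambda>s. if s = (RelK, c, 1) then {[Elt a] | a. a \<in> C} else interp A s) \<rparr>)"

fun run :: "atomic list \<Rightarrow> struct \<Rightarrow> struct \<Rightarrow> bool" where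
  "run [] A B = (B = A)"
| "run (t # ts) A B = (\<exists>C. step t A C \<and> run ts C B)"

definition wf_trans :: "atomic list \<Rightarrow> bool" where
  "wf_trans ts \<longleftrightarrow> (\<forall>t\<in>set ts. wf_atomic t)"

definition trans_sem :: "sym set \<Rightarrow> atomic list \<Rightarrow> struct \<Rightarrow> struct \<Rightarrow> bool" where
  "trans_sem Voc ts A B \<longleftrightarrow> wf_struct Voc A \<and> run ts A B"

definition overlay :: "sym set \<Rightarrow> atomic list \<Rightarrow> bool" where
  "overlay Voc ts \<longleftrightarrow> (\<forall>A B. trans_sem Voc ts A B \<longrightarrow> sqsub A B)"

definition SET_sym :: sym where "SET_sym = (SetK, ''SET'', 1)"
definition ancestor_sym :: sym where "ancestor_sym = (RelK, ''ancestor'', 2)"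

definition set_system :: "nat set \<Rightarrow> nat set set \<Rightarrow> bool" where
  "set_system U SS \<longleftrightarrow> finite U \<and> SS \<subseteq> Pow U \<and> {} \<notin> SS \<and> U \<in> SS \<and> (\<forall>a\<in>U. {a} \<in> SS)"

definition set_system_struct :: "nat set \<Rightarrow> nat set set \<Rightarrow> struct" where
  "set_system_struct U SS = \<lparr> voc = {SET_sym}, univ = U,
     interp = (\<lambda>s. if s = SET_sym then {[SetV X] | X. X \<in> SS} else {}) \<rparr>"

definition overlap :: "nat set \<Rightarrow> nat set \<Rightarrow> bool" where
  "overlap X Y \<longleftrightarrow> X \<inter> Y \<noteq> {} \<and> \<not> X \<subseteq> Y \<and> \<not> Y \<subseteq> X"

definition strong :: "nat set set \<Rightarrow> nat set set" where
  "strong SS = {X \<in> SS. \<forall>Y\<in>SS. \<not> overlap X Y}"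

definition lam_child :: "nat set set \<Rightarrow> nat set \<Rightarrow> nat set \<Rightarrow> bool" where
  "lam_child SS X Y \<longleftrightarrow> X \<in> strong SS \<and> Y \<in> strong SS \<and> X \<subset> Y
     \<and> \<not> (\<exists>Z\<in>strong SS. X \<subset> Z \<and> Z \<subset> Y)"

definition lam_ancestor :: "nat set set \<Rightarrow> nat set \<Rightarrow> nat set \<Rightarrow> bool" where
  "lam_ancestor SS X Y \<longleftrightarrow> (X, Y) \<in> {(P, C). lam_child SS C P}\<^sup>*"

definition represents_laminar_tree :: "nat set \<Rightarrow> nat set set \<Rightarrow> struct \<Rightarrow> bool" where
  "represents_laminar_tree U SS T \<longleftrightarrow> wf_struct {ancestor_sym} T \<and>
     (\<exists>h. bij_betw h (strong SS) (univ T) \<and> (\<forall>a\<in>U. h {a} = a) \<and>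
          interp T ancestor_sym =
            {[Elt (h X), Elt (h Y)] | X Y. X \<in> strong SS \<and> Y \<in> strong SS \<and> lam_ancestor SS X Y})"

end

theory Submission
  imports Defs
begin

lemma strong_in: "X \<in> strong SS \<Longrightarrow> X \<in> SS" by (simp add: strong_def)

lemma strong_cmp:
  assumes "X \<in> strong SS" "Y \<in> strong SS" "X \<inter> Y \<noteq> {}"
  shows "X \<subseteq> Y \<or> Y \<subseteq> X"
  using assms unfolding strong_def overlap_def by blast

lemma ss_sub: "set_system U SS \<Longrightarrow> X \<in> strong SS \<Longrightarrow> X \<subseteq> U"
  by (auto simp: set_system_def strong_def)
lemma ss_ne: "set_system U SS \<Longrightarrow> X \<in> strong SS \<Longrightarrow> X \<noteq> {}"
  by (auto simp: set_system_def strong_def)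
lemma ss_fin: "set_system U SS \<Longrightarrow> X \<in> strong SS \<Longrightarrow> finite X"
  by (meson finite_subset set_system_def ss_sub)

lemma sing_strong: "set_system U SS \<Longrightarrow> a \<in> U \<Longrightarrow> {a} \<in> strong SS"
  by (auto simp: set_system_def strong_def overlap_def)

lemma U_strong: "set_system U SS \<Longrightarrow> U \<in> strong SS"
  by (auto simp: set_system_def strong_def overlap_def)

lemma finite_strong: "set_system U SS \<Longrightarrow> finite (strong SS)"
proof -
  assume ss: "set_system U SS"
  have "strong SS \<subseteq> Pow U" using ss_sub[OF ss] by auto
  moreover have "finite (Pow U)" using ss by (simp add: set_system_def)
  ultimately show ?thesis by (rule finite_subset)
qed

lemma child_exists:
  assumes ss: "set_system U SS" and X: "X \<in> strong SS" and a: "a \<in> X" and ns: "\<not> (\<exists>b. X = {b})"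
  shows "\<exists>C. lam_child SS C X \<and> a \<in> C"
proof -
  let ?F = "{Z \<in> strong SS. a \<in> Z \<and> Z \<subset> X}"
  have aU: "a \<in> U" using ss_sub[OF ss X] a by auto
  have aF: "{a} \<in> ?F" using sing_strong[OF ss aU] a ns by auto
  have fin: "finite ?F" using finite_strong[OF ss] by auto
  obtain C where C: "C \<in> ?F" and max: "\<forall>Z\<in>?F. C \<le> Z \<longrightarrow> C = Z"
    using finite_has_maximal2[OF fin aF] by blast
  have "lam_child SS C X" unfolding lam_child_def
  proof (intro conjI)
    show "\<not> (\<exists>Z\<in>strong SS. C \<subset> Z \<and> Z \<subset> X)"
    proof
      assume "\<exists>Z\<in>strong SS. C \<subset> Z \<and> Z \<subset> X"
      then obtain Z where "Z \<in> strong SS" "C \<subset> Z" "Z \<subset> X" by blast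
      moreover then have "Z \<in> ?F" using C by auto
      ultimately show False using max by auto
    qed
  qed (use C X in auto)
  with C show ?thesis by auto
qed

lemma child_above:
  assumes ss: "set_system U SS" and X: "X \<in> strong SS" and Z: "Z \<in> strong SS" and ZX: "Z \<subset> X"
  shows "\<exists>C. lam_child SS C X \<and> Z \<subseteq> C"
proof -
  obtain a where a: "a \<in> Z" using ss_ne[OF ss Z] by auto
  have ns: "\<not> (\<exists>b. X = {b})" using ZX ss_ne[OF ss Z] by auto
  obtain C where C: "lam_child SS C X" "a \<in> C" using child_exists[OF ss X _ ns] a ZX by blast
  have Cs: "C \<in> strong SS" using C by (simp add: lam_child_def)
  from strong_cmp[OF Cs Z] a C have "C \<subseteq> Z \<or> Z \<subseteq> C" by auto
  then show ?thesis
  proof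
    assume "C \<subseteq> Z"
    show ?thesis
    proof (cases "C = Z")
      case True then show ?thesis using C by auto
    next
      case False then have "C \<subset> Z" using \<open>C \<subseteq> Z\<close> by auto
      then show ?thesis using C(1) Z ZX unfolding lam_child_def by blast
    qed
  qed (use C in auto)
qed

lemma child_disj:
  assumes "lam_child SS C1 X" "lam_child SS C2 X" "C1 \<noteq> C2"
  shows "C1 \<inter> C2 = {}"
proof (rule ccontr)
  assume "C1 \<inter> C2 \<noteq> {}"
  moreover have "C1 \<in> strong SS" "C2 \<in> strong SS" using assms by (auto simp: lam_child_def)
  ultimately have "C1 \<subseteq> C2 \<or> C2 \<subseteq> C1" using strong_cmp by blast
  then show False using assms unfolding lam_child_def by blast
qed

lemma child_two:
  assumes ss: "set_system U SS" and X: "X \<in> strong SS" and ns: "\<not> (\<exists>b. X = {b})"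
  shows "\<exists>c1 c2. lam_child SS c1 X \<and> lam_child SS c2 X \<and> c1 \<noteq> c2"
proof -
  obtain a where a: "a \<in> X" using ss_ne[OF ss X] by auto
  obtain C where C: "lam_child SS C X" "a \<in> C" using child_exists[OF ss X a ns] by blast
  obtain b where b: "b \<in> X" "b \<notin> C" using C(1) unfolding lam_child_def by blast
  obtain C' where C': "lam_child SS C' X" "b \<in> C'" using child_exists[OF ss X b(1) ns] by blast
  show ?thesis using C C' b by blast
qed

lemma child_cover:
  assumes ss: "set_system U SS" and X: "X \<in> strong SS" and ns: "\<not> (\<exists>b. X = {b})"
  shows "X = \<Union>{C. lam_child SS C X}"
  using child_exists[OF ss X _ ns] by (auto simp: lam_child_def)

lemma lam_anc_sub: "lam_ancestor SS X Y \<Longrightarrow> Y \<subseteq> X"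
  unfolding lam_ancestor_def
  by (induction rule: rtrancl_induct) (auto simp: lam_child_def)

lemma sub_lam_anc:
  assumes ss: "set_system U SS"
  shows "X \<in> strong SS \<Longrightarrow> Y \<in> strong SS \<Longrightarrow> Y \<subseteq> X \<Longrightarrow> lam_ancestor SS X Y"
proof (induction "card X" arbitrary: X rule: less_induct)
  case less
  show ?case
  proof (cases "Y = X")
    case True then show ?thesis by (simp add: lam_ancestor_def)
  next
    case False
    then have "Y \<subset> X" using less.prems by auto
    then obtain C where C: "lam_child SS C X" "Y \<subseteq> C" using child_above[OF ss less.prems(1) less.prems(2)] by blast
    have Cs: "C \<in> strong SS" and CX: "C \<subset> X" using C by (auto simp: lam_child_def)
    have "card C < card X" using CX ss_fin[OF ss less.prems(1)] by (simp add: psubset_card_mono)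
    then have "lam_ancestor SS C Y" using less.hyps Cs less.prems(2) C(2) by blast
    then show ?thesis using C(1) unfolding lam_ancestor_def
      by (simp add: converse_rtrancl_into_rtrancl)
  qed
qed

lemma lam_anc_iff:
  "set_system U SS \<Longrightarrow> X \<in> strong SS \<Longrightarrow> Y \<in> strong SS \<Longrightarrow> lam_ancestor SS X Y \<longleftrightarrow> Y \<subseteq> X"
  using lam_anc_sub sub_lam_anc by blast

definition lab :: "nat set \<Rightarrow> nat set \<Rightarrow> nat set \<Rightarrow> nat set \<Rightarrow> bool \<times> bool \<times> bool" where
  "lab C1 C2 C3 Y = (odd (card (Y \<inter> C1)), odd (card (Y \<inter> C2)), odd (card (Y \<inter> C3)))"

fun Dl :: "bool \<times> bool \<times> bool \<Rightarrow> bool" where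
  "Dl (a, b, c) = ((a \<and> \<not> b \<and> \<not> c) \<or> (\<not> a \<and> b \<and> \<not> c) \<or> (\<not> a \<and> \<not> b \<and> c))"

fun xor3 :: "bool \<times> bool \<times> bool \<Rightarrow> bool \<times> bool \<times> bool \<Rightarrow> bool \<times> bool \<times> bool" where
  "xor3 (a1, a2, a3) (b1, b2, b3) = (a1 \<noteq> b1, a2 \<noteq> b2, a3 \<noteq> b3)"

fun ea :: "bool \<times> bool \<times> bool \<Rightarrow> bool \<times> bool \<times> bool" where
  "ea (True, False, False) = (False, True, False)"
| "ea (True, True, False) = (False, False, True)"
| "ea (True, False, True) = (False, True, False)"
| "ea _ = (True, False, False)"

lemma alg:
  assumes "t \<noteq> (False, False, False)"
  shows "\<exists>a b x. a \<noteq> (False, False, False) \<and> b \<noteq> (False, False, False) \<and> x \<noteq> (False, False, False)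
     \<and> Dl a \<and> \<not> Dl b \<and> t = xor3 a (xor3 b (if odd m then x else (False, False, False)))"
proof -
  obtain t1 t2 t3 where t: "t = (t1, t2, t3)" by (cases t rule: prod_cases3)
  show ?thesis
proof (cases "odd m")
  case True
  let ?a = "(True, False, False)"
  let ?b = "if t = (False, True, True) then (True, True, False) else (True, True, True)"
  show ?thesis
    apply (rule exI[of _ ?a], rule exI[of _ ?b], rule exI[of _ "xor3 t (xor3 ?a ?b)"])
    using assms True unfolding t by (cases t1; cases t2; cases t3) simp_all
next
  case False
  show ?thesis
    apply (rule exI[of _ "ea t"], rule exI[of _ "xor3 t (ea t)"], rule exI[of _ "(True, False, False)"])
    using assms False unfolding t by (cases t1; cases t2; cases t3) simp_all
qed
qed

lemma odd_card_insert:
  "finite S \<Longrightarrow> c \<notin> S \<Longrightarrow> odd (card {x \<in> insert c S. P x}) = (P c \<noteq> odd (card {x \<in> S. P x}))"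
proof -
  assume fS: "finite S" and cS: "c \<notin> S"
  show ?thesis
  proof (cases "P c")
    case True
    then have "{x \<in> insert c S. P x} = insert c {x \<in> S. P x}" by auto
    then show ?thesis using fS cS True by simp
  next
    case False
    then have "{x \<in> insert c S. P x} = {x \<in> S. P x}" by auto
    then show ?thesis using False by simp
  qed
qed

lemma odd_sum_card:
  fixes f :: "'a \<Rightarrow> nat"
  shows "finite K \<Longrightarrow> odd (sum f K) = odd (card {c \<in> K. odd (f c)})"
proof (induction K rule: finite_induct)
  case empty then show ?case by simp
next
  case (insert x F)
  then show ?case using odd_card_insert[OF insert(1,2), of "\<lambda>c. odd (f c)"] by simp
qed

definition goodcol :: "nat set set \<Rightarrow> nat set \<Rightarrow> nat set \<Rightarrow> nat set \<Rightarrow> nat set \<Rightarrow> bool" where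
  "goodcol SS C1 C2 C3 Y \<longleftrightarrow> (\<forall>X\<in>strong SS. X \<subseteq> Y \<longrightarrow> \<not> (\<exists>b. X = {b}) \<longrightarrow>
        (\<exists>C. lam_child SS C X \<and> Dl (lab C1 C2 C3 C)) \<and> (\<exists>C. lam_child SS C X \<and> \<not> Dl (lab C1 C2 C3 C)))"

lemma colour_exists:
  assumes ss: "set_system U SS"
  shows "Y \<in> strong SS \<Longrightarrow> t \<noteq> (False, False, False) \<Longrightarrow>
    \<exists>C1 C2 C3. C1 \<subseteq> Y \<and> C2 \<subseteq> Y \<and> C3 \<subseteq> Y \<and> lab C1 C2 C3 Y = t \<and> goodcol SS C1 C2 C3 Y"
proof (induction "card Y" arbitrary: Y t rule: less_induct)
  case less
  obtain t1 t2 t3 where t: "t = (t1, t2, t3)" by (cases t rule: prod_cases3)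
  note Ys = less.prems(1)
  show ?case
  proof (cases "\<exists>b. Y = {b}")
    case True
    then obtain b where Yb: "Y = {b}" by auto
    let ?C = "\<lambda>ti::bool. if ti then {b} else ({}::nat set)"
    have g: "goodcol SS (?C t1) (?C t2) (?C t3) Y"
      unfolding goodcol_def using ss_ne[OF ss] Yb by (auto dest: subset_singletonD)
    have l: "lab (?C t1) (?C t2) (?C t3) Y = t" by (simp add: lab_def t Yb)
    show ?thesis using g l Yb by (intro exI[of _ "?C t1"] exI[of _ "?C t2"] exI[of _ "?C t3"]) auto
  next
    case False
    define K where "K = {C. lam_child SS C Y}"
    have Kstrong: "K \<subseteq> strong SS" by (auto simp: K_def lam_child_def)
    have finK: "finite K" using finite_subset[OF Kstrong finite_strong[OF ss]] .
    obtain c1 c2 where c12: "c1 \<in> K" "c2 \<in> K" "c1 \<noteq> c2" using child_two[OF ss Ys False] by (auto simp: K_def)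
    define K' where "K' = K - {c1, c2}"
    have KK: "K = insert c1 (insert c2 K')" using c12 by (auto simp: K'_def)
    have finK': "finite K'" using finK by (simp add: K'_def)
    obtain a b x where abx: "a \<noteq> (False,False,False)" "b \<noteq> (False,False,False)" "x \<noteq> (False,False,False)"
      "Dl a" "\<not> Dl b" "t = xor3 a (xor3 b (if odd (card K') then x else (False,False,False)))"
      using alg[OF less.prems(2), of "card K'"] by blast
    define tg where "tg c = (if c = c1 then a else if c = c2 then b else x)" for c
    have tgnz: "tg c \<noteq> (False,False,False)" for c using abx by (simp add: tg_def)
    have "\<forall>c\<in>K. \<exists>G. fst G \<subseteq> c \<and> fst (snd G) \<subseteq> c \<and> snd (snd G) \<subseteq> c
       \<and> lab (fst G) (fst (snd G)) (snd (snd G)) c = tg c \<and> goodcol SS (fst G) (fst (snd G)) (snd (snd G)) c"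
    proof
      fix c assume c: "c \<in> K"
      then have cs: "c \<in> strong SS" and cY: "c \<subset> Y" by (auto simp: K_def lam_child_def)
      have "card c < card Y" using cY ss_fin[OF ss Ys] by (simp add: psubset_card_mono)
      from less.hyps[OF this cs tgnz] show "\<exists>G. fst G \<subseteq> c \<and> fst (snd G) \<subseteq> c \<and> snd (snd G) \<subseteq> c
       \<and> lab (fst G) (fst (snd G)) (snd (snd G)) c = tg c \<and> goodcol SS (fst G) (fst (snd G)) (snd (snd G)) c"
        by auto
    qed
    then obtain G where G: "\<forall>c\<in>K. fst (G c) \<subseteq> c \<and> fst (snd (G c)) \<subseteq> c \<and> snd (snd (G c)) \<subseteq> c
       \<and> lab (fst (G c)) (fst (snd (G c))) (snd (snd (G c))) c = tg c \<and> goodcol SS (fst (G c)) (fst (snd (G c))) (snd (snd (G c))) c"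
      using bchoice by metis
    define g1 where "g1 c = fst (G c)" for c
    define g2 where "g2 c = fst (snd (G c))" for c
    define g3 where "g3 c = snd (snd (G c))" for c
    have gsub: "g1 c \<subseteq> c" "g2 c \<subseteq> c" "g3 c \<subseteq> c" if "c \<in> K" for c
      using G that by (auto simp: g1_def g2_def g3_def)
    have glab: "lab (g1 c) (g2 c) (g3 c) c = tg c" if "c \<in> K" for c
      using G that by (auto simp: g1_def g2_def g3_def)
    have ggood: "goodcol SS (g1 c) (g2 c) (g3 c) c" if "c \<in> K" for c
      using G that by (auto simp: g1_def g2_def g3_def)
    define D1 where "D1 = (\<Union>c\<in>K. g1 c)"
    define D2 where "D2 = (\<Union>c\<in>K. g2 c)"
    define D3 where "D3 = (\<Union>c\<in>K. g3 c)"
    have disj: "c \<inter> c' = {}" if "c \<in> K" "c' \<in> K" "c \<noteq> c'" for c c'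
      using child_disj[of SS c Y c'] that by (auto simp: K_def)
    have loc: "Z \<inter> (\<Union>c'\<in>K. h c') = Z \<inter> h c" if "c \<in> K" "Z \<subseteq> c" "\<And>c'. c' \<in> K \<Longrightarrow> h c' \<subseteq> c'" for Z c h
    proof -
      have "Z \<inter> h c' = {}" if "c' \<in> K" "c' \<noteq> c" for c'
        using disj[OF \<open>c \<in> K\<close> that(1)] that(2) \<open>Z \<subseteq> c\<close> \<open>\<And>c'. c' \<in> K \<Longrightarrow> h c' \<subseteq> c'\<close>[OF that(1)] by blast
      then show ?thesis using \<open>c \<in> K\<close> by blast
    qed
    have labtr: "lab D1 D2 D3 Z = lab (g1 c) (g2 c) (g3 c) Z" if "c \<in> K" "Z \<subseteq> c" for Z c
      unfolding lab_def D1_def D2_def D3_def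
      using loc[OF that, of g1] loc[OF that, of g2] loc[OF that, of g3] gsub by simp
    have cfin: "finite c" if "c \<in> K" for c using that Kstrong ss_fin[OF ss] by blast
    have par: "odd (card (\<Union>c\<in>K. h c)) = (P a \<noteq> (P b \<noteq> (P x \<and> odd (card K'))))"
      if hsub: "\<And>c. c \<in> K \<Longrightarrow> h c \<subseteq> c" and hP: "\<And>c. c \<in> K \<Longrightarrow> odd (card (h c)) = P (tg c)" for h P
    proof -
      have "card (\<Union>c\<in>K. h c) = (\<Sum>c\<in>K. card (h c))"
        apply (rule card_UN_disjoint[OF finK])
        using hsub cfin finite_subset apply blast
        using hsub disj by blast
      then have "odd (card (\<Union>c\<in>K. h c)) = odd (card {c \<in> K. odd (card (h c))})"
        using odd_sum_card[OF finK] by simp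
      also have "{c \<in> K. odd (card (h c))} = {c \<in> K. P (tg c)}" using hP by auto
      also have "odd (card {c \<in> K. P (tg c)}) = (P a \<noteq> (P b \<noteq> odd (card {c \<in> K'. P (tg c)})))"
      proof -
        have n1: "c1 \<notin> insert c2 K'" "c2 \<notin> K'" using c12 by (auto simp: K'_def)
        have e1: "odd (card {c \<in> insert c1 (insert c2 K'). P (tg c)}) = (P (tg c1) \<noteq> odd (card {c \<in> insert c2 K'. P (tg c)}))"
          by (rule odd_card_insert[OF _ n1(1)]) (simp add: finK')
        have e2: "odd (card {c \<in> insert c2 K'. P (tg c)}) = (P (tg c2) \<noteq> odd (card {c \<in> K'. P (tg c)}))"
          by (rule odd_card_insert[OF finK' n1(2)])
        have tga: "tg c1 = a" and tgb: "tg c2 = b" using c12(3) by (auto simp: tg_def)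
        show ?thesis unfolding KK by (simp only: e1 e2 tga tgb)
      qed
      also have "{c \<in> K'. P (tg c)} = (if P x then K' else {})"
        using c12 by (auto simp: K'_def tg_def)
      finally show ?thesis by simp
    qed
    have gl1: "odd (card (g1 c)) = fst (tg c)" if "c \<in> K" for c
      using arg_cong[OF glab[OF that], of fst] Int_absorb2[OF gsub(1)[OF that]] by (simp add: lab_def inf_commute)
    have gl2: "odd (card (g2 c)) = fst (snd (tg c))" if "c \<in> K" for c
      using arg_cong[OF glab[OF that], of "\<lambda>t. fst (snd t)"] Int_absorb2[OF gsub(2)[OF that]] by (simp add: lab_def inf_commute)
    have gl3: "odd (card (g3 c)) = snd (snd (tg c))" if "c \<in> K" for c
      using arg_cong[OF glab[OF that], of "\<lambda>t. snd (snd t)"] Int_absorb2[OF gsub(3)[OF that]] by (simp add: lab_def inf_commute)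
    obtain a1 a2 a3 where a: "a = (a1, a2, a3)" by (cases a rule: prod_cases3)
    obtain b1 b2 b3 where b: "b = (b1, b2, b3)" by (cases b rule: prod_cases3)
    obtain x1 x2 x3 where x: "x = (x1, x2, x3)" by (cases x rule: prod_cases3)
    have p1: "odd (card D1) = (a1 \<noteq> (b1 \<noteq> (x1 \<and> odd (card K'))))"
    proof -
      have "odd (card D1) = (fst a \<noteq> (fst b \<noteq> (fst x \<and> odd (card K'))))"
        unfolding D1_def by (rule par) (use gsub gl1 in auto)
      then show ?thesis by (simp add: a b x)
    qed
    have p2: "odd (card D2) = (a2 \<noteq> (b2 \<noteq> (x2 \<and> odd (card K'))))"
    proof -
      have "odd (card D2) = (fst (snd a) \<noteq> (fst (snd b) \<noteq> (fst (snd x) \<and> odd (card K'))))"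
        unfolding D2_def by (rule par[where P="\<lambda>t. fst (snd t)"]) (use gsub gl2 in auto)
      then show ?thesis by (simp add: a b x)
    qed
    have p3: "odd (card D3) = (a3 \<noteq> (b3 \<noteq> (x3 \<and> odd (card K'))))"
    proof -
      have "odd (card D3) = (snd (snd a) \<noteq> (snd (snd b) \<noteq> (snd (snd x) \<and> odd (card K'))))"
        unfolding D3_def by (rule par[where P="\<lambda>t. snd (snd t)"]) (use gsub gl3 in auto)
      then show ?thesis by (simp add: a b x)
    qed
    have cY: "c \<subseteq> Y" if "c \<in> K" for c using that by (auto simp: K_def lam_child_def)
    have Dsub: "D1 \<subseteq> Y" "D2 \<subseteq> Y" "D3 \<subseteq> Y"
      unfolding D1_def D2_def D3_def using gsub cY by blast+
    have labY: "lab D1 D2 D3 Y = t"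
    proof -
      have i: "Y \<inter> D1 = D1" "Y \<inter> D2 = D2" "Y \<inter> D3 = D3" using Dsub by auto
      show ?thesis unfolding lab_def i abx(6) a b x using p1 p2 p3 by (cases "odd (card K')") auto
    qed
    have goodY: "goodcol SS D1 D2 D3 Y"
      unfolding goodcol_def
    proof (intro ballI impI)
      fix X assume X: "X \<in> strong SS" "X \<subseteq> Y" "\<not> (\<exists>b. X = {b})"
      show "(\<exists>C. lam_child SS C X \<and> Dl (lab D1 D2 D3 C)) \<and> (\<exists>C. lam_child SS C X \<and> \<not> Dl (lab D1 D2 D3 C))"
      proof (cases "X = Y")
        case True
        have "lab D1 D2 D3 c1 = a" using labtr[OF c12(1) order_refl] glab[OF c12(1)] by (simp add: tg_def)
        moreover have "lab D1 D2 D3 c2 = b" using labtr[OF c12(2) order_refl] glab[OF c12(2)] c12(3) by (simp add: tg_def)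
        ultimately show ?thesis using c12 abx(4,5) True by (auto simp: K_def)
      next
        case False
        then have "X \<subset> Y" using X by auto
        then obtain c where c: "lam_child SS c Y" "X \<subseteq> c" using child_above[OF ss Ys X(1)] by blast
        then have cK: "c \<in> K" by (simp add: K_def)
        have tr: "lab D1 D2 D3 C = lab (g1 c) (g2 c) (g3 c) C" if "lam_child SS C X" for C
          using labtr[OF cK] that c(2) by (auto simp: lam_child_def)
        from ggood[OF cK] X c(2) show ?thesis unfolding goodcol_def using tr by metis
      qed
    qed
    show ?thesis using Dsub labY goodY by blast
  qed
qed

definition node0 :: "nat set set \<Rightarrow> (nat set \<Rightarrow> bool) \<Rightarrow> nat \<Rightarrow> nat set \<Rightarrow> bool" where
  "node0 SS dg r X \<longleftrightarrow> X \<in> strong SS \<and>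
     (\<exists>C. lam_child SS C X \<and> r \<in> C \<and> \<not> dg C \<and> (\<forall>Z\<in>strong SS. r \<in> Z \<and> Z \<subset> C \<longrightarrow> dg Z))"

lemma down_exists:
  assumes ss: "set_system U SS"
    and hyp: "\<And>X. X \<in> strong SS \<Longrightarrow> \<not> (\<exists>b. X = {b}) \<Longrightarrow> \<exists>C. lam_child SS C X \<and> dg C"
  shows "Y \<in> strong SS \<Longrightarrow> \<exists>r\<in>Y. \<forall>Z\<in>strong SS. r \<in> Z \<and> Z \<subset> Y \<longrightarrow> dg Z"
proof (induction "card Y" arbitrary: Y rule: less_induct)
  case less
  show ?case
  proof (cases "\<exists>b. Y = {b}")
    case True
    then show ?thesis by auto
  next
    case False
    obtain C where C: "lam_child SS C Y" "dg C" using hyp[OF less.prems False] by blast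
    have Cs: "C \<in> strong SS" and CY: "C \<subset> Y" using C by (auto simp: lam_child_def)
    have "card C < card Y" using CY ss_fin[OF ss less.prems] by (simp add: psubset_card_mono)
    then obtain r where r: "r \<in> C" "\<forall>Z\<in>strong SS. r \<in> Z \<and> Z \<subset> C \<longrightarrow> dg Z" using less.hyps Cs by blast
    have "\<forall>Z\<in>strong SS. r \<in> Z \<and> Z \<subset> Y \<longrightarrow> dg Z"
    proof (intro ballI impI)
      fix Z assume Z: "Z \<in> strong SS" "r \<in> Z \<and> Z \<subset> Y"
      from strong_cmp[OF Z(1) Cs] Z r have "Z \<subseteq> C \<or> C \<subseteq> Z" by auto
      then show "dg Z"
      proof
        assume "Z \<subseteq> C"
        then show "dg Z" using r Z C(2) by (cases "Z = C") auto
      next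
        assume "C \<subseteq> Z"
        then show "dg Z" using C(1) Z C(2) unfolding lam_child_def by (cases "Z = C") auto
      qed
    qed
    then show ?thesis using r CY by blast
  qed
qed

lemma cand_exists:
  assumes ss: "set_system U SS"
    and hyp1: "\<And>X. X \<in> strong SS \<Longrightarrow> \<not> (\<exists>b. X = {b}) \<Longrightarrow> \<exists>C. lam_child SS C X \<and> dg C"
    and hyp2: "\<And>X. X \<in> strong SS \<Longrightarrow> \<not> (\<exists>b. X = {b}) \<Longrightarrow> \<exists>C. lam_child SS C X \<and> \<not> dg C"
    and X: "X \<in> strong SS" "\<not> (\<exists>b. X = {b})"
  shows "\<exists>r. node0 SS dg r X"
proof -
  obtain C where C: "lam_child SS C X" "\<not> dg C" using hyp2[OF X] by blast
  then have "C \<in> strong SS" by (simp add: lam_child_def)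
  then obtain r where "r \<in> C" "\<forall>Z\<in>strong SS. r \<in> Z \<and> Z \<subset> C \<longrightarrow> dg Z"
    using down_exists[OF ss hyp1] by blast
  then show ?thesis using C X unfolding node0_def by blast
qed

lemma node0_props:
  assumes "node0 SS dg r X"
  shows "X \<in> strong SS" "r \<in> X" "\<not> (\<exists>b. X = {b})"
proof -
  obtain C where C: "lam_child SS C X" "r \<in> C" using assms unfolding node0_def by blast
  then have "C \<subset> X" "C \<noteq> {}" by (auto simp: lam_child_def)
  then show "X \<in> strong SS" "r \<in> X" "\<not> (\<exists>b. X = {b})" using assms C(2) unfolding node0_def by auto
qed

lemma node0_lt:
  assumes ss: "set_system U SS" and n1: "node0 SS dg r X1" and n2: "node0 SS dg r X2" and lt: "X1 \<subset> X2"
  shows False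
proof -
  obtain C1 where C1: "lam_child SS C1 X1" "r \<in> C1" "\<not> dg C1" using n1 unfolding node0_def by blast
  obtain C2 where C2: "lam_child SS C2 X2" "r \<in> C2" "\<forall>Z\<in>strong SS. r \<in> Z \<and> Z \<subset> C2 \<longrightarrow> dg Z"
    using n2 unfolding node0_def by blast
  have X1s: "X1 \<in> strong SS" using n1 by (simp add: node0_def)
  have C1s: "C1 \<in> strong SS" and C1X: "C1 \<subset> X1" using C1 by (auto simp: lam_child_def)
  have C2s: "C2 \<in> strong SS" using C2 by (auto simp: lam_child_def)
  have rX1: "r \<in> X1" using C1 C1X by auto
  from strong_cmp[OF X1s C2s] rX1 C2(2) have "X1 \<subseteq> C2 \<or> C2 \<subseteq> X1" by auto
  then have "C1 \<subset> C2"
  proof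
    assume "X1 \<subseteq> C2" then show ?thesis using C1X by auto
  next
    assume a: "C2 \<subseteq> X1"
    show ?thesis
    proof (cases "C2 = X1")
      case True then show ?thesis using C1X by simp
    next
      case False
      then have "C2 \<subset> X1" using a by auto
      then show ?thesis using C2(1) X1s lt unfolding lam_child_def by blast
    qed
  qed
  then have "dg C1" using C2(3) C1s C1(2) by blast
  then show False using C1(3) by simp
qed

lemma node0_fun:
  assumes ss: "set_system U SS" and n1: "node0 SS dg r X1" and n2: "node0 SS dg r X2"
  shows "X1 = X2"
proof -
  have "X1 \<in> strong SS" "X2 \<in> strong SS" "r \<in> X1" "r \<in> X2" using node0_props n1 n2 by auto
  then have "X1 \<subseteq> X2 \<or> X2 \<subseteq> X1" using strong_cmp by blast
  then show ?thesis using node0_lt[OF ss n1 n2] node0_lt[OF ss n2 n1] by blast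
qed

definition Rset :: "nat set set \<Rightarrow> (nat set \<Rightarrow> bool) \<Rightarrow> nat set" where
  "Rset SS dg = (\<lambda>X. SOME r. node0 SS dg r X) ` {X \<in> strong SS. \<not> (\<exists>b. X = {b})}"

lemma Rset_good:
  assumes ss: "set_system U SS"
    and hyp1: "\<And>X. X \<in> strong SS \<Longrightarrow> \<not> (\<exists>b. X = {b}) \<Longrightarrow> \<exists>C. lam_child SS C X \<and> dg C"
    and hyp2: "\<And>X. X \<in> strong SS \<Longrightarrow> \<not> (\<exists>b. X = {b}) \<Longrightarrow> \<exists>C. lam_child SS C X \<and> \<not> dg C"
  shows "Rset SS dg \<subseteq> U"
    and "\<And>X. X \<in> strong SS \<Longrightarrow> \<not> (\<exists>b. X = {b}) \<Longrightarrow> \<exists>!r. r \<in> Rset SS dg \<and> node0 SS dg r X"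
proof -
  have sel: "node0 SS dg (SOME r. node0 SS dg r X) X" if "X \<in> strong SS" "\<not> (\<exists>b. X = {b})" for X
    using cand_exists[OF ss hyp1 hyp2 that] by (rule someI_ex)
  show "Rset SS dg \<subseteq> U"
  proof
    fix r assume "r \<in> Rset SS dg"
    then obtain X where X: "X \<in> strong SS" "\<not> (\<exists>b. X = {b})" "r = (SOME r. node0 SS dg r X)"
      unfolding Rset_def by blast
    then have "r \<in> X" using sel node0_props by metis
    then show "r \<in> U" using ss_sub[OF ss X(1)] by auto
  qed
  fix X assume X: "X \<in> strong SS" "\<not> (\<exists>b. X = {b})"
  show "\<exists>!r. r \<in> Rset SS dg \<and> node0 SS dg r X"
  proof (rule ex1I[of _ "SOME r. node0 SS dg r X"])
    show "(SOME r. node0 SS dg r X) \<in> Rset SS dg \<and> node0 SS dg (SOME r. node0 SS dg r X) X"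
      using X sel unfolding Rset_def by blast
  next
    fix r assume r: "r \<in> Rset SS dg \<and> node0 SS dg r X"
    then obtain X' where X': "X' \<in> strong SS" "\<not> (\<exists>b. X' = {b})" "r = (SOME r. node0 SS dg r X')"
      unfolding Rset_def by blast
    then have "node0 SS dg r X'" using sel by simp
    then have "X' = X" using node0_fun[OF ss _ ] r by blast
    then show "r = (SOME r. node0 SS dg r X)" using X' by simp
  qed
qed

definition fand where "fand f g = FNot (FOr (FNot f) (FNot g))"
definition fimp where "fimp f g = FOr (FNot f) g"
definition fall1 where "fall1 x f = FNot (FEx1 x (FNot f))"
definition fall2 where "fall2 X f = FNot (FEx2 X (FNot f))"
definition fiff where "fiff f g = fand (fimp f g) (fimp g f)"

lemma sat_derived[simp]:
  "sat M v w (fand f g) = (sat M v w f \<and> sat M v w g)"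
  "sat M v w (fimp f g) = (sat M v w f \<longrightarrow> sat M v w g)"
  "sat M v w (fall1 x f) = (\<forall>a\<in>univ M. sat M (v(x:=a)) w f)"
  "sat M v w (fall2 X f) = (\<forall>S. S \<subseteq> univ M \<longrightarrow> sat M v (w(X:=S)) f)"
  "sat M v w (fiff f g) = (sat M v w f \<longleftrightarrow> sat M v w g)"
  by (auto simp: fand_def fimp_def fall1_def fall2_def fiff_def)

lemma fv_derived[simp]:
  "fv1 (fand f g) = fv1 f \<union> fv1 g" "fv2 (fand f g) = fv2 f \<union> fv2 g"
  "fv1 (fimp f g) = fv1 f \<union> fv1 g" "fv2 (fimp f g) = fv2 f \<union> fv2 g"
  "fv1 (fall1 x f) = fv1 f - {x}" "fv2 (fall1 x f) = fv2 f"
  "fv1 (fall2 X f) = fv1 f" "fv2 (fall2 X f) = fv2 f - {X}"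
  "fv1 (fiff f g) = fv1 f \<union> fv1 g" "fv2 (fiff f g) = fv2 f \<union> fv2 g"
  by (auto simp: fand_def fimp_def fall1_def fall2_def fiff_def)

definition fsub where "fsub X Y = fall1 0 (fimp (FMem 0 X) (FMem 0 Y))"
definition fmeet where "fmeet X Y = FEx1 0 (fand (FMem 0 X) (FMem 0 Y))"
definition fovl where "fovl X Y = fand (fmeet X Y) (fand (FNot (fsub X Y)) (FNot (fsub Y X)))"
definition fSET where "fSET X = FSetP ''SET'' [X]"
definition fstrong where "fstrong X = fand (fSET X) (fall2 20 (fimp (fSET 20) (FNot (fovl X 20))))"
definition fsing where "fsing X = FEx1 0 (fand (FMem 0 X) (fall1 1 (fimp (FMem 1 X) (FEq 1 0))))"
definition fpar where
  "fpar p Z = FEx2 21 (fand (fall1 0 (fiff (FMem 0 21) (fand (FMem 0 Z) (FRel p [0])))) (FNot (FEven 21)))"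
definition fD where
  "fD p1 p2 p3 Z = FOr (fand (fpar p1 Z) (fand (FNot (fpar p2 Z)) (FNot (fpar p3 Z))))
      (FOr (fand (FNot (fpar p1 Z)) (fand (fpar p2 Z) (FNot (fpar p3 Z))))
           (fand (FNot (fpar p1 Z)) (fand (FNot (fpar p2 Z)) (fpar p3 Z))))"
definition fnode where
  "fnode p1 p2 p3 rr r X = fand (FRel rr [r]) (fand (fstrong X) (FEx2 22
     (fand (fstrong 22) (fand (fsub 22 X) (fand (FNot (fsub X 22))
     (fand (fall2 23 (fimp (fand (fstrong 23) (fand (fsub 22 23) (fsub 23 X))) (FOr (fsub 23 22) (fsub X 23))))
     (fand (FMem r 22) (fand (FNot (fD p1 p2 p3 22))
       (fall2 23 (fimp (fand (fstrong 23) (fand (FMem r 23) (fand (fsub 23 22) (FNot (fsub 22 23))))) (fD p1 p2 p3 23)))))))))))"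

definition colset :: "struct \<Rightarrow> string \<Rightarrow> nat set" where
  "colset M p = {a. [Elt a] \<in> interp M (RelK, p, 1)}"

definition goodM :: "struct \<Rightarrow> nat set \<Rightarrow> nat set set \<Rightarrow> bool" where
  "goodM M U SS \<longleftrightarrow> U \<subseteq> univ M \<and> interp M SET_sym = {[SetV X] | X. X \<in> SS}"

definition dgM :: "struct \<Rightarrow> string \<Rightarrow> string \<Rightarrow> string \<Rightarrow> nat set \<Rightarrow> bool" where
  "dgM M p1 p2 p3 Z = Dl (lab (colset M p1) (colset M p2) (colset M p3) Z)"

lemma sat_fsub[simp]: "sat M v w (fsub X Y) = (\<forall>a\<in>univ M. a \<in> w X \<longrightarrow> a \<in> w Y)"
  by (simp add: fsub_def)

lemma sat_fsing[simp]: "sat M v w (fsing X) = (\<exists>a\<in>univ M. a \<in> w X \<and> (\<forall>b\<in>univ M. b \<in> w X \<longrightarrow> b = a))"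
  by (simp add: fsing_def)

lemma colset_iff[simp]: "([Elt a] \<in> interp M (RelK, p, Suc 0)) = (a \<in> colset M p)"
  by (simp add: colset_def)

lemma sat_fSET: "goodM M U SS \<Longrightarrow> sat M v w (fSET X) = (w X \<in> SS)"
  by (auto simp: fSET_def goodM_def SET_sym_def)

lemma sub_univ: "A \<subseteq> univ M \<Longrightarrow> (\<forall>a\<in>univ M. a \<in> A \<longrightarrow> a \<in> B) = (A \<subseteq> B)"
  by auto

lemma sing_univ: "A \<subseteq> univ M \<Longrightarrow> (\<exists>a\<in>univ M. a \<in> A \<and> (\<forall>b\<in>univ M. b \<in> A \<longrightarrow> b = a)) = (\<exists>a. A = {a})"
  by auto

lemma good_sub: "set_system U SS \<Longrightarrow> goodM M U SS \<Longrightarrow> X \<in> SS \<Longrightarrow> X \<subseteq> univ M"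
  by (auto simp: set_system_def goodM_def)

lemma sat_fstrong:
  assumes ss: "set_system U SS" and g: "goodM M U SS" and X: "X \<noteq> 20"
  shows "sat M v w (fstrong X) = (w X \<in> strong SS)"
proof -
  have e: "sat M v (w(20 := S)) (fovl X 20) = overlap (w X) S" if "w X \<in> SS" "S \<in> SS" for S
    using X good_sub[OF ss g that(1)] good_sub[OF ss g that(2)]
    by (auto simp: fovl_def fmeet_def overlap_def)
  show ?thesis
    unfolding fstrong_def strong_def using X e good_sub[OF ss g]
    by (auto simp: sat_fSET[OF g])
qed

lemma sat_fpar:
  assumes Z: "Z \<noteq> 21"
  shows "sat M v w (fpar p Z) = odd (card {a \<in> univ M. a \<in> w Z \<and> a \<in> colset M p})"
proof -
  let ?S = "{a \<in> univ M. a \<in> w Z \<and> a \<in> colset M p}"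
  have "sat M v w (fpar p Z) = (\<exists>S. S \<subseteq> univ M \<and> (\<forall>a\<in>univ M. (a \<in> S) = (a \<in> w Z \<and> a \<in> colset M p)) \<and> odd (card S))"
    using Z by (simp add: fpar_def)
  also have "\<dots> = odd (card ?S)"
  proof
    assume "\<exists>S. S \<subseteq> univ M \<and> (\<forall>a\<in>univ M. (a \<in> S) = (a \<in> w Z \<and> a \<in> colset M p)) \<and> odd (card S)"
    then obtain S where "S \<subseteq> univ M" "\<forall>a\<in>univ M. (a \<in> S) = (a \<in> w Z \<and> a \<in> colset M p)" "odd (card S)" by blast
    moreover then have "S = ?S" by auto
    ultimately show "odd (card ?S)" by simp
  next
    assume "odd (card ?S)" then show "\<exists>S. S \<subseteq> univ M \<and> (\<forall>a\<in>univ M. (a \<in> S) = (a \<in> w Z \<and> a \<in> colset M p)) \<and> odd (card S)"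
      by (intro exI[of _ ?S]) auto
  qed
  finally show ?thesis .
qed

lemma sat_fD:
  assumes Z: "Z \<noteq> 21" and sub: "w Z \<subseteq> univ M"
  shows "sat M v w (fD p1 p2 p3 Z) = dgM M p1 p2 p3 (w Z)"
proof -
  have e: "{a \<in> univ M. a \<in> w Z \<and> a \<in> colset M p} = w Z \<inter> colset M p" for p using sub by auto
  show ?thesis unfolding fD_def dgM_def lab_def using Z by (simp add: sat_fpar e)
qed

lemma node0_alt:
  assumes V: "\<And>Z. Z \<in> strong SS \<Longrightarrow> Z \<subseteq> V"
  shows "node0 SS dg r X \<longleftrightarrow> X \<in> strong SS \<and> (\<exists>S\<subseteq>V. S \<in> strong SS \<and> S \<subseteq> X \<and> \<not> X \<subseteq> S \<and>
     (\<forall>Sa\<subseteq>V. Sa \<in> strong SS \<and> S \<subseteq> Sa \<and> Sa \<subseteq> X \<longrightarrow> Sa \<subseteq> S \<or> X \<subseteq> Sa) \<and> r \<in> S \<and> \<not> dg S \<and>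
     (\<forall>Sa\<subseteq>V. Sa \<in> strong SS \<and> r \<in> Sa \<and> Sa \<subseteq> S \<and> \<not> S \<subseteq> Sa \<longrightarrow> dg Sa))" (is "?L = ?R")
proof
  assume ?L
  then obtain C where X: "X \<in> strong SS" and C: "lam_child SS C X" "r \<in> C" "\<not> dg C"
    "\<forall>Z\<in>strong SS. r \<in> Z \<and> Z \<subset> C \<longrightarrow> dg Z" unfolding node0_def by blast
  have Cs: "C \<in> strong SS" "C \<subset> X" "\<not> (\<exists>Z\<in>strong SS. C \<subset> Z \<and> Z \<subset> X)" using C(1) by (auto simp: lam_child_def)
  show ?R
  proof (intro conjI X exI[of _ C])
    show "C \<subseteq> V" using V Cs by blast
    show "\<forall>Sa\<subseteq>V. Sa \<in> strong SS \<and> C \<subseteq> Sa \<and> Sa \<subseteq> X \<longrightarrow> Sa \<subseteq> C \<or> X \<subseteq> Sa"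
    proof (intro allI impI)
      fix Sa assume a: "Sa \<subseteq> V" "Sa \<in> strong SS \<and> C \<subseteq> Sa \<and> Sa \<subseteq> X"
      show "Sa \<subseteq> C \<or> X \<subseteq> Sa"
      proof (rule ccontr)
        assume "\<not> (Sa \<subseteq> C \<or> X \<subseteq> Sa)"
        then have "C \<subset> Sa" "Sa \<subset> X" using a by auto
        then show False using Cs(3) a(2) by blast
      qed
    qed
    show "\<forall>Sa\<subseteq>V. Sa \<in> strong SS \<and> r \<in> Sa \<and> Sa \<subseteq> C \<and> \<not> C \<subseteq> Sa \<longrightarrow> dg Sa"
    proof (intro allI impI)
      fix Sa assume a: "Sa \<subseteq> V" "Sa \<in> strong SS \<and> r \<in> Sa \<and> Sa \<subseteq> C \<and> \<not> C \<subseteq> Sa"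
      then have "Sa \<subset> C" by auto
      then show "dg Sa" using C(4) a(2) by blast
    qed
    show "C \<subseteq> X" "\<not> X \<subseteq> C" using Cs(2) by auto
  qed (use Cs C in simp_all)
next
  assume R: ?R
  then obtain C where X: "X \<in> strong SS" and C: "C \<in> strong SS" "C \<subseteq> X" "\<not> X \<subseteq> C"
     "\<forall>Sa\<subseteq>V. Sa \<in> strong SS \<and> C \<subseteq> Sa \<and> Sa \<subseteq> X \<longrightarrow> Sa \<subseteq> C \<or> X \<subseteq> Sa" "r \<in> C" "\<not> dg C"
     "\<forall>Sa\<subseteq>V. Sa \<in> strong SS \<and> r \<in> Sa \<and> Sa \<subseteq> C \<and> \<not> C \<subseteq> Sa \<longrightarrow> dg Sa"
    by (elim conjE exE) blast
  have "lam_child SS C X" unfolding lam_child_def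
  proof (intro conjI C(1) X)
    show "C \<subset> X" using C by auto
    show "\<not> (\<exists>Z\<in>strong SS. C \<subset> Z \<and> Z \<subset> X)"
    proof
      assume "\<exists>Z\<in>strong SS. C \<subset> Z \<and> Z \<subset> X"
      then obtain Z where "Z \<in> strong SS" "C \<subset> Z" "Z \<subset> X" by blast
      moreover then have "Z \<subseteq> V" "C \<subseteq> Z" "Z \<subseteq> X" using V by auto
      moreover have "Z \<subseteq> C \<or> X \<subseteq> Z" by (rule C(4)[rule_format]) (use calculation in auto)
      ultimately show False by auto
    qed
  qed
  moreover have "\<forall>Z\<in>strong SS. r \<in> Z \<and> Z \<subset> C \<longrightarrow> dg Z"
  proof (intro ballI impI)
    fix Z assume "Z \<in> strong SS" "r \<in> Z \<and> Z \<subset> C"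
    moreover then have "Z \<subseteq> V" "Z \<subseteq> C" "\<not> C \<subseteq> Z" using V by auto
    ultimately show "dg Z" using C(7) by simp
  qed
  ultimately show ?L unfolding node0_def using X C by blast
qed

lemma nsub_univ: "A \<subseteq> univ M \<Longrightarrow> (\<exists>a\<in>univ M. a \<in> A \<and> a \<notin> B) = (\<not> A \<subseteq> B)"
  by auto

lemma sat_fnode:
  assumes ss: "set_system U SS" and g: "goodM M U SS" and X: "X \<noteq> 20" "X \<noteq> 21" "X \<noteq> 22" "X \<noteq> 23"
  shows "sat M v w (fnode p1 p2 p3 rr r X) = (v r \<in> colset M rr \<and> node0 SS (dgM M p1 p2 p3) (v r) (w X))"
proof -
  have su: "Z \<in> strong SS \<Longrightarrow> Z \<subseteq> univ M" for Z using good_sub[OF ss g] strong_in by blast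
  show ?thesis
    unfolding fnode_def using X
    apply (subst node0_alt[where V="univ M"])
     apply (erule su)
    apply (simp add: sat_fstrong[OF ss g] sat_fD cong: conj_cong)
    apply (simp add: sub_univ nsub_univ su cong: conj_cong)
    done
qed

definition fPhi where
  "fPhi p1 p2 p3 rr = fall2 0 (fimp (fand (fstrong 0) (FNot (fsing 0)))
     (FEx1 2 (fand (fnode p1 p2 p3 rr 2 0) (fall1 3 (fimp (fnode p1 p2 p3 rr 3 0) (FEq 3 2))))))"

definition fRho where
  "fRho p1 p2 p3 rr cc = FOr (FNot (FEx1 1 (FRel cc [1, 0])))
     (FEx1 1 (fand (FRel cc [1, 0]) (FEx2 0 (fnode p1 p2 p3 rr 1 0))))"

definition frep where
  "frep p1 p2 p3 rr cc u X = FOr (fand (FNot (FEx1 2 (FRel cc [2, u]))) (fand (fSET X) (fand (FMem u X) (fsing X))))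
     (FEx1 2 (fand (FRel cc [2, u]) (fnode p1 p2 p3 rr 2 X)))"

definition fAnc where
  "fAnc p1 p2 p3 rr cc = FEx2 0 (FEx2 1 (fand (frep p1 p2 p3 rr cc 0 0) (fand (frep p1 p2 p3 rr cc 1 1) (fsub 1 0))))"

definition NR :: "struct \<Rightarrow> nat set set \<Rightarrow> string \<Rightarrow> string \<Rightarrow> string \<Rightarrow> string \<Rightarrow> nat \<Rightarrow> nat set \<Rightarrow> bool" where
  "NR M SS p1 p2 p3 rr r X \<longleftrightarrow> r \<in> colset M rr \<and> node0 SS (dgM M p1 p2 p3) r X"

lemma NR_univ: "set_system U SS \<Longrightarrow> goodM M U SS \<Longrightarrow> NR M SS p1 p2 p3 rr r X \<Longrightarrow> r \<in> univ M"
  unfolding NR_def using node0_props good_sub strong_in by blast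

lemma sat_fPhi:
  assumes ss: "set_system U SS" and g: "goodM M U SS"
  shows "sat M v w (fPhi p1 p2 p3 rr) =
    (\<forall>X\<in>strong SS. \<not> (\<exists>b. X = {b}) \<longrightarrow> (\<exists>!r. NR M SS p1 p2 p3 rr r X))"
proof -
  have su: "Z \<in> strong SS \<Longrightarrow> Z \<subseteq> univ M" for Z using good_sub[OF ss g] strong_in by blast
  have "sat M v w (fPhi p1 p2 p3 rr) =
    (\<forall>X. X \<subseteq> univ M \<longrightarrow> X \<in> strong SS \<and> \<not> (\<exists>b. X = {b}) \<longrightarrow>
       (\<exists>r\<in>univ M. NR M SS p1 p2 p3 rr r X \<and> (\<forall>r'\<in>univ M. NR M SS p1 p2 p3 rr r' X \<longrightarrow> r' = r)))"
    unfolding fPhi_def NR_def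
    by (simp add: sat_fstrong[OF ss g] sat_fnode[OF ss g] sing_univ cong: conj_cong)
  also have "\<dots> = (\<forall>X. X \<subseteq> univ M \<longrightarrow> X \<in> strong SS \<and> \<not> (\<exists>b. X = {b}) \<longrightarrow> (\<exists>!r. NR M SS p1 p2 p3 rr r X))"
  proof -
    have e: "(\<exists>r\<in>univ M. NR M SS p1 p2 p3 rr r X \<and> (\<forall>r'\<in>univ M. NR M SS p1 p2 p3 rr r' X \<longrightarrow> r' = r))
       = (\<exists>!r. NR M SS p1 p2 p3 rr r X)" for X
      using NR_univ[OF ss g, of p1 p2 p3 rr _ X] by blast
    show ?thesis by (simp only: e)
  qed
  also have "\<dots> = (\<forall>X\<in>strong SS. \<not> (\<exists>b. X = {b}) \<longrightarrow> (\<exists>!r. NR M SS p1 p2 p3 rr r X))"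
  proof
    assume "\<forall>X. X \<subseteq> univ M \<longrightarrow> X \<in> strong SS \<and> \<not> (\<exists>b. X = {b}) \<longrightarrow> (\<exists>!r. NR M SS p1 p2 p3 rr r X)"
    then show "\<forall>X\<in>strong SS. \<not> (\<exists>b. X = {b}) \<longrightarrow> (\<exists>!r. NR M SS p1 p2 p3 rr r X)" using su by simp
  qed simp
  finally show ?thesis .
qed

lemma cp2: "(map f [x, y] \<in> interp M (RelK, p, length [x, y])) = ([f x, f y] \<in> interp M (RelK, p, 2))"
  by (simp add: numeral_2_eq_2)

lemma sat_fRho:
  assumes ss: "set_system U SS" and g: "goodM M U SS"
  shows "sat M v w (fRho p1 p2 p3 rr cc) =
    ((\<not> (\<exists>y\<in>univ M. [Elt y, Elt (v 0)] \<in> interp M (RelK, cc, 2))) \<or>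
     (\<exists>y\<in>univ M. [Elt y, Elt (v 0)] \<in> interp M (RelK, cc, 2) \<and> (\<exists>X. NR M SS p1 p2 p3 rr y X)))"
proof -
  have su: "Z \<in> strong SS \<Longrightarrow> Z \<subseteq> univ M" for Z using good_sub[OF ss g] strong_in by blast
  have n: "NR M SS p1 p2 p3 rr y X \<Longrightarrow> X \<subseteq> univ M" for y X
    unfolding NR_def using node0_props su by blast
  have exNR: "(\<exists>S\<subseteq>univ M. NR M SS p1 p2 p3 rr y S) = (\<exists>X. NR M SS p1 p2 p3 rr y X)" for y
    using n by blast
  show ?thesis unfolding fRho_def
    apply (simp only: sat.simps sat_derived cp2)
    apply (simp add: sat_fnode[OF ss g] flip: NR_def)
    apply (simp only: exNR)
    done
qed

lemma sing_mem: "(A \<in> SS \<and> x \<in> A \<and> (\<exists>a. A = {a})) = (A = {x} \<and> A \<in> SS)"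
  by auto

lemma sat_frep:
  assumes ss: "set_system U SS" and g: "goodM M U SS" and X: "X \<noteq> 20" "X \<noteq> 21" "X \<noteq> 22" "X \<noteq> 23"
    and u: "u \<noteq> 2" and wX: "w X \<subseteq> univ M"
  shows "sat M v w (frep p1 p2 p3 rr cc u X) =
    (((\<not> (\<exists>y\<in>univ M. [Elt y, Elt (v u)] \<in> interp M (RelK, cc, 2))) \<and> w X = {v u} \<and> w X \<in> SS) \<or>
     (\<exists>y\<in>univ M. [Elt y, Elt (v u)] \<in> interp M (RelK, cc, 2) \<and> NR M SS p1 p2 p3 rr y (w X)))"
  unfolding frep_def using X u wX
  apply (simp only: sat.simps sat_derived cp2)
  apply (simp add: sat_fnode[OF ss g] sat_fSET[OF g] sing_univ flip: NR_def)
  apply (simp only: sing_mem)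
  done

definition colst :: "string \<Rightarrow> nat set \<Rightarrow> struct \<Rightarrow> struct" where
  "colst p C A = \<lparr>voc = voc A \<union> {(RelK, p, 1)}, univ = univ A,
     interp = (\<lambda>s. if s = (RelK, p, 1) then {[Elt a] | a. a \<in> C} else interp A s)\<rparr>"

lemma colst_sel[simp]: "univ (colst p C A) = univ A" "voc (colst p C A) = voc A \<union> {(RelK, p, 1)}"
  "interp (colst p C A) s = (if s = (RelK, p, 1) then {[Elt a] | a. a \<in> C} else interp A s)"
  by (simp_all add: colst_def)

lemma step_colour: "step (Colour p) A B \<longleftrightarrow> (\<exists>C. C \<subseteq> univ A \<and> B = colst p C A)"
  by (simp add: colst_def)

definition copst :: "string \<Rightarrow> (nat \<Rightarrow> nat) \<Rightarrow> struct \<Rightarrow> struct" where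
  "copst c g A = \<lparr>voc = voc A \<union> {(RelK, c, 2)}, univ = univ A \<union> g ` univ A,
     interp = (\<lambda>s. if s = (RelK, c, 2) then {[Elt a, Elt (g a)] | a. a \<in> univ A} else interp A s)\<rparr>"

lemma copst_sel[simp]: "univ (copst c g A) = univ A \<union> g ` univ A" "voc (copst c g A) = voc A \<union> {(RelK, c, 2)}"
  "interp (copst c g A) s = (if s = (RelK, c, 2) then {[Elt a, Elt (g a)] | a. a \<in> univ A} else interp A s)"
  by (simp_all add: copst_def)

lemma step_copy: "step (Copy [c]) A B \<longleftrightarrow> (\<exists>g. inj_on g (univ A) \<and> (\<forall>a\<in>univ A. g a \<notin> univ A) \<and> B = copst c g A)"
proof -
  have v: "{(RelK, [c] ! i, 2) | i. i < length [c]} = {(RelK, c, 2)}" by auto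
  have u: "{f i a | i a. i < length [c] \<and> a \<in> univ A} = f 0 ` univ A" for f :: "nat \<Rightarrow> nat \<Rightarrow> nat" by auto
  have it: "(\<lambda>s. {[Elt a, Elt (f i a)] | a i. i < length [c] \<and> s = (RelK, [c] ! i, 2) \<and> a \<in> univ A} \<union>
      (if s \<in> {(RelK, c, 2)} then {} else interp A s)) =
      (\<lambda>s. if s = (RelK, c, 2) then {[Elt a, Elt (f 0 a)] | a. a \<in> univ A} else interp A s)" for f :: "nat \<Rightarrow> nat \<Rightarrow> nat"
    by (auto simp: fun_eq_iff)
  have inj: "inj_on (\<lambda>(i, a). f i a) ({..<length [c]} \<times> univ A) = inj_on (f 0) (univ A)" for f :: "nat \<Rightarrow> nat \<Rightarrow> nat"
    by (auto simp: inj_on_def)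
  have ni: "(\<forall>i<length [c]. \<forall>a\<in>univ A. f i a \<notin> univ A) = (\<forall>a\<in>univ A. f 0 a \<notin> univ A)" for f :: "nat \<Rightarrow> nat \<Rightarrow> nat"
    by auto
  have "step (Copy [c]) A B \<longleftrightarrow> (\<exists>f :: nat \<Rightarrow> nat \<Rightarrow> nat. inj_on (f 0) (univ A) \<and> (\<forall>a\<in>univ A. f 0 a \<notin> univ A) \<and> B = copst c (f 0) A)"
    unfolding step.simps copst_def v u it inj ni ..
  also have "\<dots> \<longleftrightarrow> (\<exists>g. inj_on g (univ A) \<and> (\<forall>a\<in>univ A. g a \<notin> univ A) \<and> B = copst c g A)"
  proof
    assume "\<exists>g. inj_on g (univ A) \<and> (\<forall>a\<in>univ A. g a \<notin> univ A) \<and> B = copst c g A"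
    then obtain g where "inj_on g (univ A) \<and> (\<forall>a\<in>univ A. g a \<notin> univ A) \<and> B = copst c g A" by blast
    then show "\<exists>f :: nat \<Rightarrow> nat \<Rightarrow> nat. inj_on (f 0) (univ A) \<and> (\<forall>a\<in>univ A. f 0 a \<notin> univ A) \<and> B = copst c (f 0) A"
      by (intro exI[of _ "\<lambda>_. g"]) simp
  qed blast
  finally show ?thesis .
qed

definition Dst :: "form \<Rightarrow> struct \<Rightarrow> struct" where
  "Dst f A = (let U' = {a \<in> univ A. sat A (\<lambda>_. a) (\<lambda>_. {}) f} in
      \<lparr> voc = voc A, univ = U',
        interp = (\<lambda>s. {t \<in> interp A s. \<forall>x\<in>set t. case x of Elt e \<Rightarrow> e \<in> U' | SetV X \<Rightarrow> X \<subseteq> U'}) \<rparr>)"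

lemma step_restrict: "step (Restrict f) A B \<longleftrightarrow> B = Dst f A"
  by (simp add: Dst_def Let_def)

lemma Dst_sel[simp]: "univ (Dst f A) = {a \<in> univ A. sat A (\<lambda>_. a) (\<lambda>_. {}) f}"
  "interp (Dst f A) s = {t \<in> interp A s. \<forall>x\<in>set t. case x of Elt e \<Rightarrow> e \<in> {a \<in> univ A. sat A (\<lambda>_. a) (\<lambda>_. {}) f}
      | SetV X \<Rightarrow> X \<subseteq> {a \<in> univ A. sat A (\<lambda>_. a) (\<lambda>_. {}) f}}"
  unfolding Dst_def Let_def by simp_all

definition Ist :: "(sym \<times> form) list \<Rightarrow> struct \<Rightarrow> struct" where
  "Ist l A = \<lparr> voc = set (map fst l), univ = univ A,
            interp = (\<lambda>s. case map_of l s of None \<Rightarrow> {} | Some f \<Rightarrow> interp_sym A s f) \<rparr>"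

lemma step_interp: "step (Interp l) A B \<longleftrightarrow> B = Ist l A"
  by (simp add: Ist_def)

definition Mst where
  "Mst p1 p2 p3 rr cc C1 C2 C3 R g A = copst cc g (colst rr R (colst p3 C3 (colst p2 C2 (colst p1 C1 A))))"

definition tau where
  "tau p1 p2 p3 rr cc l = [Colour p1, Colour p2, Colour p3, Colour rr, Copy [cc],
     Filter (fPhi p1 p2 p3 rr), Restrict (fRho p1 p2 p3 rr cc), Interp l]"

lemma ex_comp2: "(\<exists>C. (\<exists>x. Q x \<and> C = f x) \<and> P C) = (\<exists>x. Q x \<and> P (f x))"
  by blast

lemma ex_comp3: "(\<exists>C. (\<exists>x. Q x \<and> R x \<and> C = f x) \<and> P C) = (\<exists>x. Q x \<and> R x \<and> P (f x))"
  by blast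

lemma ex_comp4: "(\<exists>C. (C = D \<and> S) \<and> P C) = (S \<and> P D)"
  by blast

lemma run_tau:
  "run (tau p1 p2 p3 rr cc l) A B \<longleftrightarrow> (\<exists>C1 C2 C3 R g. C1 \<subseteq> univ A \<and> C2 \<subseteq> univ A \<and> C3 \<subseteq> univ A \<and> R \<subseteq> univ A
     \<and> inj_on g (univ A) \<and> (\<forall>a\<in>univ A. g a \<notin> univ A)
     \<and> sat (Mst p1 p2 p3 rr cc C1 C2 C3 R g A) (\<lambda>_. 0) (\<lambda>_. {}) (fPhi p1 p2 p3 rr)
     \<and> B = Ist l (Dst (fRho p1 p2 p3 rr cc) (Mst p1 p2 p3 rr cc C1 C2 C3 R g A)))"
  unfolding tau_def Mst_def
  apply (simp only: run.simps step_colour step_copy step_restrict step_interp step.simps(1))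
  apply (simp only: ex_comp2 ex_comp3 ex_comp4 colst_sel(1) simp_thms ex_simps conj_assoc)
  done

definition names_ok :: "sym set \<Rightarrow> string \<Rightarrow> string \<Rightarrow> string \<Rightarrow> string \<Rightarrow> string \<Rightarrow> bool" where
  "names_ok Voc p1 p2 p3 rr cc \<longleftrightarrow> distinct [p1, p2, p3, rr, cc] \<and>
     (\<forall>n\<in>{p1, p2, p3, rr, cc}. \<forall>k a. (k, n, a) \<notin> Voc)"

fun vform :: "sym \<Rightarrow> form" where
  "vform (RelK, n, a) = FRel n [0..<a]"
| "vform (SetK, n, a) = FSetP n [0..<a]"

definition lst where
  "lst vs p1 p2 p3 rr cc = map (\<lambda>Q. (Q, vform Q)) vs @ [(ancestor_sym, fAnc p1 p2 p3 rr cc)]"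

lemma map_of_lst: "map_of (map (\<lambda>Q. (Q, f Q)) vs @ [(k, \<phi>)]) s =
   (if s \<in> set vs then Some (f s) else if s = k then Some \<phi> else None)"
  by (induction vs) auto

lemma interp_sym_vform:
  assumes wf: "wf_struct Voc A" and Q: "Q \<in> Voc" and DQ: "interp D Q = interp A Q" and uA: "univ A \<subseteq> univ D"
  shows "interp_sym D Q (vform Q) = interp A Q"
proof -
  obtain k n a where Qe: "Q = (k, n, a)" by (cases Q rule: prod_cases3)
  have wfQ: "\<And>t. t \<in> interp A Q \<Longrightarrow> length t = a \<and> (\<forall>x\<in>set t. (case k of
               RelK \<Rightarrow> (\<exists>e\<in>univ A. x = Elt e) | SetK \<Rightarrow> (\<exists>X. X \<subseteq> univ A \<and> x = SetV X)))"
    using wf Q unfolding wf_struct_def Qe by blast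
  show ?thesis
  proof (cases k)
    case RelK
    have m: "map (\<lambda>x. Elt (xs ! x)) [0..<length xs] = map Elt xs" for xs :: "nat list"
      by (rule nth_equalityI) auto
    show ?thesis
    proof
      show "interp_sym D Q (vform Q) \<subseteq> interp A Q"
        unfolding Qe RelK using DQ m by (auto simp: Qe RelK)
      show "interp A Q \<subseteq> interp_sym D Q (vform Q)"
      proof
        fix t assume t: "t \<in> interp A Q"
        then have lt: "length t = a" and el: "\<forall>x\<in>set t. \<exists>e\<in>univ A. x = Elt e" using wfQ RelK by auto
        define xs where "xs = map (\<lambda>x. case x of Elt e \<Rightarrow> e | SetV _ \<Rightarrow> 0) t"
        have txs: "t = map Elt xs" unfolding xs_def using el by (induction t) auto
        have "set xs \<subseteq> univ A" using el unfolding xs_def by auto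
        then show "t \<in> interp_sym D Q (vform Q)"
          using t txs lt uA DQ m[of xs] by (auto simp: Qe RelK intro!: exI[of _ xs])
      qed
    qed
  next
    case SetK
    have m: "map (\<lambda>x. SetV (xs ! x)) [0..<length xs] = map SetV xs" for xs :: "nat set list"
      by (rule nth_equalityI) auto
    show ?thesis
    proof
      show "interp_sym D Q (vform Q) \<subseteq> interp A Q"
        unfolding Qe SetK using DQ m by (auto simp: Qe SetK)
      show "interp A Q \<subseteq> interp_sym D Q (vform Q)"
      proof
        fix t assume t: "t \<in> interp A Q"
        then have lt: "length t = a" and el: "\<forall>x\<in>set t. \<exists>X. X \<subseteq> univ A \<and> x = SetV X" using wfQ SetK by auto
        define xs where "xs = map (\<lambda>x. case x of SetV X \<Rightarrow> X | Elt _ \<Rightarrow> {}) t"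
        have txs: "t = map SetV xs" unfolding xs_def using el by (induction t) auto
        have "\<forall>X\<in>set xs. X \<subseteq> univ A" using el unfolding xs_def by fastforce
        then show "t \<in> interp_sym D Q (vform Q)"
          using t txs lt uA DQ m[of xs] by (auto simp: Qe SetK intro!: exI[of _ xs])
      qed
    qed
  qed
qed

lemma Ist_interp: "interp (Ist l D) s = (case map_of l s of None \<Rightarrow> {} | Some f \<Rightarrow> interp_sym D s f)"
  by (simp add: Ist_def)

lemma Ist_univ: "univ (Ist l D) = univ D" by (simp add: Ist_def)
lemma Ist_voc: "voc (Ist l D) = set (map fst l)" by (simp add: Ist_def)

locale base_loc =
  fixes Voc p1 p2 p3 rr cc A C1 C2 C3 R g
  assumes nm: "names_ok Voc p1 p2 p3 rr cc" and wf: "wf_struct Voc A"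
     and ginj: "inj_on g (univ A)" and gout: "\<forall>a\<in>univ A. g a \<notin> univ A"
     and Csub: "C1 \<subseteq> univ A" "C2 \<subseteq> univ A" "C3 \<subseteq> univ A" "R \<subseteq> univ A"
begin

abbreviation "M \<equiv> Mst p1 p2 p3 rr cc C1 C2 C3 R g A"
abbreviation "D \<equiv> Dst (fRho p1 p2 p3 rr cc) M"

lemma nv: "n \<in> {p1, p2, p3, rr, cc} \<Longrightarrow> (k, n, a) \<notin> Voc"
  using nm unfolding names_ok_def by blast

lemma dn: "p1 \<noteq> p2" "p1 \<noteq> p3" "p1 \<noteq> rr" "p2 \<noteq> p3" "p2 \<noteq> rr" "p3 \<noteq> rr"
  using nm unfolding names_ok_def by auto

lemma M_univ: "univ M = univ A \<union> g ` univ A" by (simp add: Mst_def)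

lemma M_Voc: "Q \<in> Voc \<Longrightarrow> interp M Q = interp A Q"
  using nv[of cc RelK 2] nv[of rr RelK 1] nv[of p1 RelK 1] nv[of p2 RelK 1] nv[of p3 RelK 1]
  by (auto simp: Mst_def)

lemma M_SET: "interp M SET_sym = interp A SET_sym" by (simp add: Mst_def SET_sym_def)

lemma M_cp: "interp M (RelK, cc, 2) = {[Elt a, Elt (g a)] | a. a \<in> univ A}" by (simp add: Mst_def)

lemma M_col: "colset M p1 = C1" "colset M p2 = C2" "colset M p3 = C3" "colset M rr = R"
  using dn by (auto simp: Mst_def colset_def)

lemma cpM_iff: "([Elt y, Elt x] \<in> interp M (RelK, cc, 2)) = (y \<in> univ A \<and> x = g y)"
  by (auto simp: M_cp)

lemma D_univ: "univ D = {a \<in> univ M. sat M (\<lambda>_. a) (\<lambda>_. {}) (fRho p1 p2 p3 rr cc)}" by simp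

lemma D_univA: "univ A \<subseteq> univ D"
proof
  fix a assume a: "a \<in> univ A"
  have "sat M (\<lambda>_. a) (\<lambda>_. {}) (fRho p1 p2 p3 rr cc)"
    unfolding fRho_def using a gout
    by (simp only: sat.simps cp2 cpM_iff) auto
  then show "a \<in> univ D" using a M_univ by simp
qed

lemma D_sub_M: "univ D \<subseteq> univ M" by auto

lemma D_interp: "t \<in> interp D s \<longleftrightarrow> t \<in> interp M s \<and> (\<forall>x\<in>set t. case x of Elt e \<Rightarrow> e \<in> univ D | SetV X \<Rightarrow> X \<subseteq> univ D)"
  unfolding Dst_sel mem_Collect_eq by (rule refl)

lemma D_Voc: "Q \<in> Voc \<Longrightarrow> interp D Q = interp A Q"
proof -
  assume Q: "Q \<in> Voc"
  obtain k n a where Qe: "Q = (k, n, a)" by (cases Q rule: prod_cases3)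
  have el: "\<forall>x\<in>set t. case x of Elt e \<Rightarrow> e \<in> univ D | SetV X \<Rightarrow> X \<subseteq> univ D" if "t \<in> interp A Q" for t
  proof
    fix x assume x: "x \<in> set t"
    have "case k of RelK \<Rightarrow> (\<exists>e\<in>univ A. x = Elt e) | SetK \<Rightarrow> (\<exists>X. X \<subseteq> univ A \<and> x = SetV X)"
      using wf Q that x unfolding wf_struct_def Qe by blast
    then show "case x of Elt e \<Rightarrow> e \<in> univ D | SetV X \<Rightarrow> X \<subseteq> univ D"
      using D_univA by (cases k) auto
  qed
  show ?thesis
    using el M_Voc[OF Q] by (auto simp only: D_interp)
qed

lemma overlay_one:
  assumes vs: "set vs = Voc"
  shows "sqsub A (Ist (lst vs p1 p2 p3 rr cc) D)"
  unfolding sqsub_def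
proof (intro conjI ballI)
  show "voc A \<subseteq> voc (Ist (lst vs p1 p2 p3 rr cc) D)"
    using wf vs by (auto simp: wf_struct_def Ist_def lst_def)
  show "univ A \<subseteq> univ (Ist (lst vs p1 p2 p3 rr cc) D)"
    using D_univA by (simp add: Ist_def)
  fix Q assume "Q \<in> voc A"
  then have Q: "Q \<in> Voc" using wf by (simp add: wf_struct_def)
  have "interp (Ist (lst vs p1 p2 p3 rr cc) D) Q = interp_sym D Q (vform Q)"
    using Q vs by (simp only: Ist_interp lst_def map_of_lst) simp
  also have "\<dots> = interp A Q"
    by (rule interp_sym_vform[OF wf Q D_Voc[OF Q] D_univA])
  finally show "interp A Q = interp (Ist (lst vs p1 p2 p3 rr cc) D) Q" by simp
qed

end

locale core_loc = base_loc +
  fixes U SS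
  assumes ss: "set_system U SS" and sq: "sqsub (set_system_struct U SS) A"
    and phi: "sat M (\<lambda>_. 0) (\<lambda>_. {}) (fPhi p1 p2 p3 rr)"
begin

declare Dst_sel[simp del]

abbreviation "nd r X \<equiv> NR M SS p1 p2 p3 rr r X"

lemma UA: "U \<subseteq> univ A" using sq by (simp add: sqsub_def set_system_struct_def)

lemma A_SET: "interp A SET_sym = {[SetV X] | X. X \<in> SS}"
  using sq by (simp add: sqsub_def set_system_struct_def)

lemma gM: "goodM M U SS"
  using UA A_SET M_SET M_univ unfolding goodM_def by auto

lemma uniq: "X \<in> strong SS \<Longrightarrow> \<not> (\<exists>b. X = {b}) \<Longrightarrow> \<exists>!r. nd r X"
  using phi sat_fPhi[OF ss gM] by blast

lemma nd_props: "nd r X \<Longrightarrow> X \<in> strong SS \<and> r \<in> X \<and> \<not> (\<exists>b. X = {b}) \<and> r \<in> univ A"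
  using node0_props[of SS _ r X] ss_sub[OF ss] UA unfolding NR_def by blast

lemma univD: "univ D = univ A \<union> {g b | b. b \<in> univ A \<and> (\<exists>X. nd b X)}"
proof -
  have "sat M (\<lambda>_. a) (\<lambda>_. {}) (fRho p1 p2 p3 rr cc) =
     ((\<not> (\<exists>y\<in>univ M. y \<in> univ A \<and> a = g y)) \<or> (\<exists>y\<in>univ M. (y \<in> univ A \<and> a = g y) \<and> (\<exists>X. nd y X)))" for a
    using sat_fRho[OF ss gM, of "\<lambda>_. a"] by (simp only: cpM_iff)
  then show ?thesis using gout M_univ by (auto simp: D_univ)
qed

lemma gD: "goodM D U SS"
proof -
  have "U \<subseteq> univ D" using UA D_univA by blast
  moreover have "interp D SET_sym = {[SetV X] | X. X \<in> SS}"
  proof -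
    have "X \<subseteq> univ D" if "X \<in> SS" for X using that ss \<open>U \<subseteq> univ D\<close> by (auto simp: set_system_def)
    then show ?thesis using M_SET A_SET by (auto simp only: D_interp) auto
  qed
  ultimately show ?thesis by (simp add: goodM_def)
qed

lemma colD: "p \<in> {p1, p2, p3, rr} \<Longrightarrow> colset D p = colset M p"
proof -
  assume p: "p \<in> {p1, p2, p3, rr}"
  have "colset M p \<subseteq> univ D" using p M_col Csub D_univA by auto
  then show ?thesis unfolding colset_def using D_interp by auto
qed

lemma dgD: "dgM D p1 p2 p3 = dgM M p1 p2 p3"
  by (rule ext) (simp add: dgM_def colD)

lemma NRD: "NR D SS p1 p2 p3 rr = NR M SS p1 p2 p3 rr"
  by (simp add: NR_def dgD colD fun_eq_iff)

lemma cpD_iff: "([Elt y, Elt x] \<in> interp D (RelK, cc, 2)) = (y \<in> univ A \<and> x = g y \<and> x \<in> univ D)"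
  using D_interp[of "[Elt y, Elt x]"] cpM_iff D_univA by auto

definition h :: "nat set \<Rightarrow> nat" where
  "h X = (if \<exists>a. X = {a} then the_elem X else g (THE r. nd r X))"

lemma h_sing: "h {a} = a" by (simp add: h_def)

lemma h_int: "X \<in> strong SS \<Longrightarrow> \<not> (\<exists>b. X = {b}) \<Longrightarrow> nd (THE r. nd r X) X \<and> h X = g (THE r. nd r X)"
  using uniq[of X] theI'[of "\<lambda>r. nd r X"] by (simp add: h_def)

lemma h_int2: "nd r X \<Longrightarrow> h X = g r"
proof -
  assume n: "nd r X"
  then have X: "X \<in> strong SS" "\<not> (\<exists>b. X = {b})" using nd_props by auto
  then have "(THE r. nd r X) = r" using uniq n by (simp add: the1_equality)
  then show ?thesis using h_int[OF X] by simp
qed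

lemma h_U: "X \<in> strong SS \<Longrightarrow> h X \<in> univ A \<longleftrightarrow> (\<exists>a. X = {a})"
proof -
  assume X: "X \<in> strong SS"
  show ?thesis
  proof (cases "\<exists>a. X = {a}")
    case True
    then obtain a where "X = {a}" by auto
    then show ?thesis using X ss_sub[OF ss X] UA h_sing by auto
  next
    case False
    then show ?thesis using h_int[OF X False] nd_props gout by metis
  qed
qed

lemma h_inj: "inj_on h (strong SS)"
proof (rule inj_onI)
  fix X Y assume X: "X \<in> strong SS" and Y: "Y \<in> strong SS" and e: "h X = h Y"
  show "X = Y"
  proof (cases "\<exists>a. X = {a}")
    case True
    then obtain a where a: "X = {a}" by auto
    then have "h Y \<in> univ A" using e h_U X by metis
    then obtain b where b: "Y = {b}" using h_U Y by blast
    then show ?thesis using a e h_sing by simp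
  next
    case False
    then have "\<not> (\<exists>a. Y = {a})" using e h_U X Y by metis
    then obtain rY where rY: "nd rY Y" "h Y = g rY" using h_int Y by blast
    obtain rX where rX: "nd rX X" "h X = g rX" using h_int X False by blast
    have "rX = rY" using ginj rX rY e nd_props unfolding inj_on_def by metis
    then show ?thesis using node0_fun[OF ss] rX(1) rY(1) unfolding NR_def by blast
  qed
qed

lemma h_img: "h ` strong SS = U \<union> {g b | b. b \<in> univ A \<and> (\<exists>X. nd b X)}"
proof
  show "h ` strong SS \<subseteq> U \<union> {g b | b. b \<in> univ A \<and> (\<exists>X. nd b X)}"
  proof
    fix x assume "x \<in> h ` strong SS"
    then obtain X where X: "X \<in> strong SS" "x = h X" by blast
    show "x \<in> U \<union> {g b | b. b \<in> univ A \<and> (\<exists>X. nd b X)}"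
    proof (cases "\<exists>a. X = {a}")
      case True
      then show ?thesis using X ss_sub[OF ss X(1)] h_sing by auto
    next
      case False
      then show ?thesis using h_int[OF X(1) False] X nd_props by blast
    qed
  qed
  show "U \<union> {g b | b. b \<in> univ A \<and> (\<exists>X. nd b X)} \<subseteq> h ` strong SS"
  proof
    fix x assume "x \<in> U \<union> {g b | b. b \<in> univ A \<and> (\<exists>X. nd b X)}"
    then show "x \<in> h ` strong SS"
    proof
      assume "x \<in> U"
      then show ?thesis using sing_strong[OF ss] h_sing by (metis image_eqI)
    next
      assume "x \<in> {g b | b. b \<in> univ A \<and> (\<exists>X. nd b X)}"
      then obtain b X where "x = g b" "nd b X" by blast
      then show ?thesis using h_int2 nd_props by (metis image_eqI)
    qed
  qed
qed

lemma univD2: "univ D = univ A \<union> h ` strong SS"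
  using univD h_img UA by auto

lemma strong_D: "X \<in> strong SS \<Longrightarrow> X \<subseteq> univ D"
  using ss_sub[OF ss] UA D_univA by blast

lemma rep:
  assumes X: "X \<noteq> 20" "X \<noteq> 21" "X \<noteq> 22" "X \<noteq> 23" and u: "u \<noteq> 2"
    and x: "v u \<in> univ D" and S: "w X \<subseteq> univ D"
  shows "sat D v w (frep p1 p2 p3 rr cc u X) = (w X \<in> strong SS \<and> v u = h (w X))"
proof -
  have e: "sat D v w (frep p1 p2 p3 rr cc u X) =
    (((\<not> (\<exists>y\<in>univ D. y \<in> univ A \<and> v u = g y \<and> v u \<in> univ D)) \<and> w X = {v u} \<and> w X \<in> SS) \<or>
     (\<exists>y\<in>univ D. (y \<in> univ A \<and> v u = g y \<and> v u \<in> univ D) \<and> nd y (w X)))"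
    using sat_frep[where v=v and w=w, OF ss gD X u S]
    by (simp only: cpD_iff NRD)
  show ?thesis
  proof (cases "v u \<in> univ A")
    case True
    then have n: "\<not> (\<exists>y. y \<in> univ A \<and> v u = g y)" using gout by auto
    have "sat D v w (frep p1 p2 p3 rr cc u X) = (w X = {v u} \<and> w X \<in> SS)" using e n by blast
    also have "\<dots> = (w X \<in> strong SS \<and> v u = h (w X))"
    proof
      assume a: "w X = {v u} \<and> w X \<in> SS"
      then have "v u \<in> U" using ss by (auto simp: set_system_def)
      then show "w X \<in> strong SS \<and> v u = h (w X)" using a sing_strong[OF ss] h_sing by simp
    next
      assume a: "w X \<in> strong SS \<and> v u = h (w X)"
      then obtain b where "w X = {b}" using h_U True by metis
      then show "w X = {v u} \<and> w X \<in> SS" using a h_sing strong_in by simp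
    qed
    finally show ?thesis .
  next
    case False
    then obtain b X0 where b: "v u = g b" "b \<in> univ A" "nd b X0" using x univD by blast
    have yb: "(y \<in> univ A \<and> v u = g y) = (y = b)" for y using b ginj unfolding inj_on_def by metis
    have bD: "b \<in> univ D" using b D_univA by blast
    have "sat D v w (frep p1 p2 p3 rr cc u X) = nd b (w X)" using e yb bD x by auto
    also have "\<dots> = (w X \<in> strong SS \<and> v u = h (w X))"
    proof
      assume "nd b (w X)"
      then show "w X \<in> strong SS \<and> v u = h (w X)" using h_int2 nd_props b by metis
    next
      assume a: "w X \<in> strong SS \<and> v u = h (w X)"
      then have ns: "\<not> (\<exists>c. w X = {c})" using h_U False by metis
      then obtain r where r: "nd r (w X)" "h (w X) = g r" using h_int a by blast
      then have "r = b" using a b ginj nd_props unfolding inj_on_def by metis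
      then show "nd b (w X)" using r by simp
    qed
    finally show ?thesis .
  qed
qed

lemma anc:
  assumes "v 0 \<in> univ D" "v 1 \<in> univ D"
  shows "sat D v (\<lambda>_. {}) (fAnc p1 p2 p3 rr cc) =
    (\<exists>S0 S1. S0 \<in> strong SS \<and> S1 \<in> strong SS \<and> v 0 = h S0 \<and> v 1 = h S1 \<and> S1 \<subseteq> S0)"
proof -
  have "sat D v (\<lambda>_. {}) (fAnc p1 p2 p3 rr cc) =
    (\<exists>S0. S0 \<subseteq> univ D \<and> (\<exists>S1. S1 \<subseteq> univ D \<and> (S0 \<in> strong SS \<and> v 0 = h S0) \<and> (S1 \<in> strong SS \<and> v 1 = h S1)
       \<and> (\<forall>a\<in>univ D. a \<in> S1 \<longrightarrow> a \<in> S0)))"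
  proof -
    have r0: "sat D v ((\<lambda>_. {})(0 := S0, 1 := S1)) (frep p1 p2 p3 rr cc 0 0) = (S0 \<in> strong SS \<and> v 0 = h S0)"
      if "S0 \<subseteq> univ D" "S1 \<subseteq> univ D" for S0 S1
      using rep[of 0 0 v "(\<lambda>_. {})(0 := S0, 1 := S1)"] assms that by simp
    have r1: "sat D v ((\<lambda>_. {})(0 := S0, 1 := S1)) (frep p1 p2 p3 rr cc 1 1) = (S1 \<in> strong SS \<and> v 1 = h S1)"
      if "S0 \<subseteq> univ D" "S1 \<subseteq> univ D" for S0 S1
      using rep[of 1 1 v "(\<lambda>_. {})(0 := S0, 1 := S1)"] assms that by simp
    show ?thesis
      unfolding fAnc_def
      apply (simp only: sat.simps sat_derived sat_fsub)
      apply (simp only: r0 r1 fun_upd_apply cong: conj_cong)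
      apply simp
      done
  qed
  also have "\<dots> = (\<exists>S0 S1. S0 \<in> strong SS \<and> S1 \<in> strong SS \<and> v 0 = h S0 \<and> v 1 = h S1 \<and> S1 \<subseteq> S0)"
  proof
    assume "\<exists>S0. S0 \<subseteq> univ D \<and> (\<exists>S1. S1 \<subseteq> univ D \<and> (S0 \<in> strong SS \<and> v 0 = h S0) \<and> (S1 \<in> strong SS \<and> v 1 = h S1)
       \<and> (\<forall>a\<in>univ D. a \<in> S1 \<longrightarrow> a \<in> S0))"
    then obtain S0 S1 where "S1 \<subseteq> univ D" "S0 \<in> strong SS" "v 0 = h S0" "S1 \<in> strong SS" "v 1 = h S1"
       "\<forall>a\<in>univ D. a \<in> S1 \<longrightarrow> a \<in> S0" by blast
    then show "\<exists>S0 S1. S0 \<in> strong SS \<and> S1 \<in> strong SS \<and> v 0 = h S0 \<and> v 1 = h S1 \<and> S1 \<subseteq> S0"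
      by (intro exI[of _ S0] exI[of _ S1]) auto
  next
    assume "\<exists>S0 S1. S0 \<in> strong SS \<and> S1 \<in> strong SS \<and> v 0 = h S0 \<and> v 1 = h S1 \<and> S1 \<subseteq> S0"
    then obtain S0 S1 where "S0 \<in> strong SS" "S1 \<in> strong SS" "v 0 = h S0" "v 1 = h S1" "S1 \<subseteq> S0" by blast
    then show "\<exists>S0. S0 \<subseteq> univ D \<and> (\<exists>S1. S1 \<subseteq> univ D \<and> (S0 \<in> strong SS \<and> v 0 = h S0) \<and> (S1 \<in> strong SS \<and> v 1 = h S1)
       \<and> (\<forall>a\<in>univ D. a \<in> S1 \<longrightarrow> a \<in> S0))"
      using strong_D by (intro exI[of _ S0] exI[of _ S1]) auto
  qed
  finally show ?thesis .
qed

end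

lemma len2: "length xs = 2 \<Longrightarrow> \<exists>a b. xs = [a, b]"
  by (cases xs; simp; case_tac list; simp)

context core_loc
begin

definition Tst :: struct where
  "Tst = \<lparr>voc = {ancestor_sym}, univ = h ` strong SS,
     interp = (\<lambda>s. if s = ancestor_sym then {[Elt (h X), Elt (h Y)] | X Y. X \<in> strong SS \<and> Y \<in> strong SS \<and> lam_ancestor SS X Y} else {})\<rparr>"

lemma T_rep: "represents_laminar_tree U SS Tst"
  unfolding represents_laminar_tree_def
proof (intro conjI)
  show "wf_struct {ancestor_sym} Tst"
    unfolding wf_struct_def Tst_def using finite_strong[OF ss] by (auto simp: ancestor_sym_def)
  show "\<exists>h. bij_betw h (strong SS) (univ Tst) \<and> (\<forall>a\<in>U. h {a} = a) \<and>
      interp Tst ancestor_sym = {[Elt (h X), Elt (h Y)] | X Y. X \<in> strong SS \<and> Y \<in> strong SS \<and> lam_ancestor SS X Y}"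
    by (intro exI[of _ h]) (simp add: Tst_def h_sing inj_on_imp_bij_betw[OF h_inj])
qed

lemma anc_interp: "interp_sym D ancestor_sym (fAnc p1 p2 p3 rr cc) = interp Tst ancestor_sym"
proof
  show "interp_sym D ancestor_sym (fAnc p1 p2 p3 rr cc) \<subseteq> interp Tst ancestor_sym"
  proof
    fix t assume "t \<in> interp_sym D ancestor_sym (fAnc p1 p2 p3 rr cc)"
    then obtain xs where t: "t = map Elt xs" "length xs = 2" "set xs \<subseteq> univ D"
        "sat D (\<lambda>i. xs ! i) (\<lambda>_. {}) (fAnc p1 p2 p3 rr cc)"
      by (auto simp: ancestor_sym_def)
    then obtain x0 x1 where xs: "xs = [x0, x1]" using len2 by blast
    have "\<exists>S0 S1. S0 \<in> strong SS \<and> S1 \<in> strong SS \<and> x0 = h S0 \<and> x1 = h S1 \<and> S1 \<subseteq> S0"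
      using anc[of "\<lambda>i. xs ! i"] t xs by simp
    then show "t \<in> interp Tst ancestor_sym"
      using t(1) xs lam_anc_iff[OF ss] by (auto simp: Tst_def)
  qed
  show "interp Tst ancestor_sym \<subseteq> interp_sym D ancestor_sym (fAnc p1 p2 p3 rr cc)"
  proof
    fix t assume "t \<in> interp Tst ancestor_sym"
    then obtain X Y where XY: "t = [Elt (h X), Elt (h Y)]" "X \<in> strong SS" "Y \<in> strong SS" "lam_ancestor SS X Y"
      by (auto simp: Tst_def)
    then have YX: "Y \<subseteq> X" using lam_anc_iff[OF ss] by blast
    have inD: "h X \<in> univ D" "h Y \<in> univ D" using XY univD2 by auto
    have "sat D (\<lambda>i. [h X, h Y] ! i) (\<lambda>_. {}) (fAnc p1 p2 p3 rr cc)"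
      using anc[of "\<lambda>i. [h X, h Y] ! i"] inD XY YX by auto
    then show "t \<in> interp_sym D ancestor_sym (fAnc p1 p2 p3 rr cc)"
      using XY inD by (auto simp: ancestor_sym_def intro!: exI[of _ "[h X, h Y]"])
  qed
qed

lemma core:
  assumes vs: "set vs = Voc" and av: "ancestor_sym \<notin> Voc"
  shows "Ist (lst vs p1 p2 p3 rr cc) D = join A Tst"
proof (rule struct.equality)
  have vA: "voc A = Voc" using wf by (simp add: wf_struct_def)
  show "voc (Ist (lst vs p1 p2 p3 rr cc) D) = voc (join A Tst)"
    using vs vA by (simp add: Ist_voc lst_def join_def Tst_def)
  show "univ (Ist (lst vs p1 p2 p3 rr cc) D) = univ (join A Tst)"
    using univD2 by (simp add: Ist_univ join_def Tst_def)
  show "interp (Ist (lst vs p1 p2 p3 rr cc) D) = interp (join A Tst)"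
  proof
    fix s
    show "interp (Ist (lst vs p1 p2 p3 rr cc) D) s = interp (join A Tst) s"
    proof (cases "s \<in> Voc")
      case True
      then have "interp (Ist (lst vs p1 p2 p3 rr cc) D) s = interp_sym D s (vform s)"
        using vs by (simp only: Ist_interp lst_def map_of_lst) simp
      also have "\<dots> = interp A s" by (rule interp_sym_vform[OF wf True D_Voc[OF True] D_univA])
      finally show ?thesis using True vA av by (auto simp: join_def Tst_def)
    next
      case False
      show ?thesis
      proof (cases "s = ancestor_sym")
        case True
        then have "interp (Ist (lst vs p1 p2 p3 rr cc) D) s = interp_sym D ancestor_sym (fAnc p1 p2 p3 rr cc)"
          using vs av by (simp only: Ist_interp lst_def map_of_lst) simp
        then show ?thesis using True av vA anc_interp by (simp add: join_def Tst_def)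
      next
        case F2: False
        have "interp (Ist (lst vs p1 p2 p3 rr cc) D) s = {}"
          using vs False F2 by (simp only: Ist_interp lst_def map_of_lst) simp
        then show ?thesis using False F2 vA by (simp add: join_def Tst_def)
      qed
    qed
  qed
  show "struct.more (Ist (lst vs p1 p2 p3 rr cc) D) = struct.more (join A Tst)"
    by (simp add: Ist_def join_def)
qed

end

lemma fv_basic[simp]:
  "fv1 (fsub X Y) = {}" "fv2 (fsub X Y) = {X, Y}"
  "fv1 (fsing X) = {}" "fv2 (fsing X) = {X}"
  "fv1 (fSET X) = {}" "fv2 (fSET X) = {X}"
  "fv1 (fstrong X) = {}" "fv2 (fstrong X) = {X}"
  "fv1 (fpar p Z) = {}" "fv2 (fpar p Z) = {Z} - {21}"
  by (auto simp: fsub_def fsing_def fSET_def fstrong_def fovl_def fmeet_def fpar_def)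

lemma fv_fD[simp]: "fv1 (fD p1 p2 p3 Z) = {}" "fv2 (fD p1 p2 p3 Z) = {Z} - {21}"
  by (auto simp: fD_def)

lemma fv_fnode[simp]: "fv1 (fnode p1 p2 p3 rr r X) = {r}"
  "X \<noteq> 22 \<Longrightarrow> X \<noteq> 23 \<Longrightarrow> fv2 (fnode p1 p2 p3 rr r X) = {X}"
  by (auto simp: fnode_def)

lemma fv_Phi: "fv1 (fPhi p1 p2 p3 rr) = {}" "fv2 (fPhi p1 p2 p3 rr) = {}"
  by (auto simp: fPhi_def)

lemma fv_Rho: "fv1 (fRho p1 p2 p3 rr cc) \<subseteq> {0}" "fv2 (fRho p1 p2 p3 rr cc) = {}"
  by (auto simp: fRho_def)

lemma fv_Anc: "fv1 (fAnc p1 p2 p3 rr cc) \<subseteq> {..<2}" "fv2 (fAnc p1 p2 p3 rr cc) = {}"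
  by (auto simp: fAnc_def frep_def)

lemma wf_tau:
  assumes vs: "set vs = Voc" "distinct vs" and av: "ancestor_sym \<notin> Voc" and nm: "names_ok Voc p1 p2 p3 rr cc"
  shows "wf_trans (tau p1 p2 p3 rr cc (lst vs p1 p2 p3 rr cc))"
proof -
  have d: "distinct (map fst (lst vs p1 p2 p3 rr cc))"
    using vs av by (simp add: lst_def comp_def)
  have v: "\<forall>((k, n, a), f) \<in> set (map (\<lambda>Q. (Q, vform Q)) vs). case k of
         RelK \<Rightarrow> fv1 f \<subseteq> {..<a} \<and> fv2 f = {}
       | SetK \<Rightarrow> fv1 f = {} \<and> fv2 f \<subseteq> {..<a}"
    by (auto split: kind.split)
  have "wf_atomic (Interp (lst vs p1 p2 p3 rr cc))"
    using d v fv_Anc by (simp add: lst_def ancestor_sym_def)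
  moreover have "distinct [cc]" by simp
  ultimately show ?thesis
    unfolding wf_trans_def tau_def using fv_Phi fv_Rho by simp
qed


lemma fresh_names:
  assumes "finite Voc"
  shows "\<exists>p1 p2 p3 rr cc. names_ok Voc p1 p2 p3 rr cc"
proof -
  let ?N = "(\<lambda>(k, n, a). n) ` Voc"
  have fN: "finite ?N" using assms by simp
  have nw: "\<And>F :: string set. finite F \<Longrightarrow> \<exists>x. x \<notin> F" using ex_new_if_finite[OF infinite_UNIV_listI] by blast
  obtain p1 where a1: "p1 \<notin> ?N" using nw[OF fN] by blast
  obtain p2 where a2: "p2 \<notin> insert p1 ?N" using nw fN by (meson finite_insert)
  obtain p3 where a3: "p3 \<notin> insert p2 (insert p1 ?N)" using nw fN by (meson finite_insert)
  obtain rr where a4: "rr \<notin> insert p3 (insert p2 (insert p1 ?N))" using nw fN by (meson finite_insert)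
  obtain cc where a5: "cc \<notin> insert rr (insert p3 (insert p2 (insert p1 ?N)))" using nw fN by (meson finite_insert)
  have "names_ok Voc p1 p2 p3 rr cc"
    unfolding names_ok_def using a1 a2 a3 a4 a5 by (force simp: image_iff)
  then show ?thesis by blast
qed

theorem lemma4p1:
  fixes Voc :: "sym set"
  assumes "finite Voc" and "SET_sym \<in> Voc" and "ancestor_sym \<notin> Voc"
  shows "\<exists>\<tau>. wf_trans \<tau> \<and> overlay Voc \<tau> \<and>
    (\<forall>U SS A. set_system U SS \<and> wf_struct Voc A \<and> sqsub (set_system_struct U SS) A \<longrightarrow>
       (\<exists>B. trans_sem Voc \<tau> A B) \<and>
       (\<forall>B. trans_sem Voc \<tau> A B \<longrightarrow>
          (\<exists>T. represents_laminar_tree U SS T \<and> B = join A T)))"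
proof -
  obtain vs where vs: "set vs = Voc" "distinct vs" using finite_distinct_list[OF assms(1)] by blast
  obtain p1 p2 p3 rr cc where nm: "names_ok Voc p1 p2 p3 rr cc" using fresh_names[OF assms(1)] by blast
  define l where "l = lst vs p1 p2 p3 rr cc"
  define \<tau> where "\<tau> = tau p1 p2 p3 rr cc l"
  have wft: "wf_trans \<tau>" unfolding \<tau>_def l_def by (rule wf_tau[OF vs assms(3) nm])
  have ovl: "overlay Voc \<tau>"
    unfolding overlay_def trans_sem_def
  proof (intro allI impI)
    fix A B assume AB: "wf_struct Voc A \<and> run \<tau> A B"
    then obtain C1 C2 C3 R g where cg: "C1 \<subseteq> univ A" "C2 \<subseteq> univ A" "C3 \<subseteq> univ A" "R \<subseteq> univ A"
       "inj_on g (univ A)" "\<forall>a\<in>univ A. g a \<notin> univ A"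
       and B: "B = Ist l (Dst (fRho p1 p2 p3 rr cc) (Mst p1 p2 p3 rr cc C1 C2 C3 R g A))"
      unfolding \<tau>_def run_tau by blast
    interpret base_loc Voc p1 p2 p3 rr cc A C1 C2 C3 R g
      using nm AB cg by unfold_locales auto
    show "sqsub A B" using overlay_one[OF vs(1)] B l_def by simp
  qed
  have main: "(\<exists>B. trans_sem Voc \<tau> A B) \<and>
       (\<forall>B. trans_sem Voc \<tau> A B \<longrightarrow> (\<exists>T. represents_laminar_tree U SS T \<and> B = join A T))"
    if H: "set_system U SS" "wf_struct Voc A" "sqsub (set_system_struct U SS) A" for U SS A
  proof
    have UA: "U \<subseteq> univ A" using H(3) by (simp add: sqsub_def set_system_struct_def)
    have A_SET: "interp A SET_sym = {[SetV X] | X. X \<in> SS}"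
      using H(3) by (simp add: sqsub_def set_system_struct_def)
    show "\<forall>B. trans_sem Voc \<tau> A B \<longrightarrow> (\<exists>T. represents_laminar_tree U SS T \<and> B = join A T)"
    proof (intro allI impI)
      fix B assume "trans_sem Voc \<tau> A B"
      then have "run \<tau> A B" by (simp add: trans_sem_def)
      then obtain C1 C2 C3 R g where cg: "C1 \<subseteq> univ A" "C2 \<subseteq> univ A" "C3 \<subseteq> univ A" "R \<subseteq> univ A"
         "inj_on g (univ A)" "\<forall>a\<in>univ A. g a \<notin> univ A"
         and phi: "sat (Mst p1 p2 p3 rr cc C1 C2 C3 R g A) (\<lambda>_. 0) (\<lambda>_. {}) (fPhi p1 p2 p3 rr)"
         and B: "B = Ist l (Dst (fRho p1 p2 p3 rr cc) (Mst p1 p2 p3 rr cc C1 C2 C3 R g A))"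
        unfolding \<tau>_def run_tau by blast
      interpret core_loc Voc p1 p2 p3 rr cc A C1 C2 C3 R g U SS
        using nm H cg phi by unfold_locales auto
      show "\<exists>T. represents_laminar_tree U SS T \<and> B = join A T"
        using T_rep core[OF vs(1) assms(3)] B l_def by blast
    qed
    show "\<exists>B. trans_sem Voc \<tau> A B"
    proof -
      note ss = H(1)
      obtain C1 C2 C3 where Cs: "C1 \<subseteq> U" "C2 \<subseteq> U" "C3 \<subseteq> U" "goodcol SS C1 C2 C3 U"
        using colour_exists[OF ss U_strong[OF ss], of "(True, False, False)"] by auto
      define dg0 where "dg0 = (\<lambda>Z. Dl (lab C1 C2 C3 Z))"
      have hyp1: "\<exists>C. lam_child SS C X \<and> dg0 C" if "X \<in> strong SS" "\<not> (\<exists>b. X = {b})" for X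
        using Cs(4) that ss_sub[OF ss that(1)] unfolding goodcol_def dg0_def by blast
      have hyp2: "\<exists>C. lam_child SS C X \<and> \<not> dg0 C" if "X \<in> strong SS" "\<not> (\<exists>b. X = {b})" for X
        using Cs(4) that ss_sub[OF ss that(1)] unfolding goodcol_def dg0_def by blast
      define R where "R = Rset SS dg0"
      have RU: "R \<subseteq> U" unfolding R_def by (rule Rset_good(1)[OF ss hyp1 hyp2])
      have Runiq: "\<exists>!r. r \<in> R \<and> node0 SS dg0 r X" if "X \<in> strong SS" "\<not> (\<exists>b. X = {b})" for X
        unfolding R_def by (rule Rset_good(2)[OF ss hyp1 hyp2 that])
      define N where "N = Suc (Max (insert 0 (univ A)))"
      define g where "g = (\<lambda>a::nat. a + N)"
      have finA: "finite (univ A)" using H(2) by (simp add: wf_struct_def)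
      have ginj: "inj_on g (univ A)" by (simp add: g_def inj_on_def)
      have gout: "\<forall>a\<in>univ A. g a \<notin> univ A"
      proof (intro ballI notI)
        fix a assume "a \<in> univ A" "g a \<in> univ A"
        then have "g a \<le> Max (insert 0 (univ A))" using finA by (intro Max_ge) auto
        then show False by (simp add: g_def N_def)
      qed
      interpret base_loc Voc p1 p2 p3 rr cc A C1 C2 C3 R g
        using nm H Cs RU UA ginj gout by unfold_locales auto
      have gM: "goodM M U SS" using UA A_SET M_SET M_univ unfolding goodM_def by auto
      have dgeq: "dgM M p1 p2 p3 = dg0" by (rule ext) (simp add: dgM_def M_col dg0_def)
      have phi: "sat M (\<lambda>_. 0) (\<lambda>_. {}) (fPhi p1 p2 p3 rr)"
        unfolding sat_fPhi[OF ss gM] NR_def dgeq M_col(4) using Runiq by blast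
      have "run \<tau> A (Ist l D)"
        unfolding \<tau>_def run_tau
        by (intro exI[of _ C1] exI[of _ C2] exI[of _ C3] exI[of _ R] exI[of _ g]) (use Cs RU UA ginj gout phi in auto)
      then show ?thesis using H(2) by (auto simp: trans_sem_def)
    qed
  qed
  show ?thesis using wft ovl main by blast
qed

end
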